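(* Let $M,N$ be positive integers, let $Z_0\ge Z_1\ge\dots\ge Z_{N-1}$ be real numbers, let $(S^{(t)})_{t\in\mathbb Z}$ be real numbers, and let $W^{(m)}_r\in\mathbb R$ ($r=0,\dots,N-1$, $m\in\mathbb Z$) with $W^{(m)}_r=W^{(m\bmod M)}_r$, such that \[ W^{(m)}_{r_1}-W^{(m+1)}_{r_1}+W^{(m+1)}_{r_0}-W^{(m)}_{r_0}+\frac{Z_{r_0}-Z_{r_1}}{M}\ge0 \] for all $m=0,\dots,M-1$ and all $0\le r_0<r_1\le N-1$. For $k,t\in\mathbb Z$ let $T^{(k,t)}_0:=0$ and, for $n=1,\dots,N$, \[ T^{(k,t)}_n:=\min_{0\le r_0<r_1<\dots<r_{n-1}\le N-1}\sum_{j=0}^{n-1}\Big(W^{(k+j)}_{r_j}+\frac{k+(M+1)j}{M}Z_{r_j}+\sum_{\tau=0}^{t-1}\min(Z_{r_j},S^{(\tau)})\Big), \] and $T^{(k,t)}_n:=+\infty$ for $n>N$. Define \begin{gather*} Q^{(k,t)}_n=T^{(k,t)}_n-T^{(k,t)}_{n+1}+T^{(k+1,t)}_{n+1}-T^{(k+1,t)}_n,\quad D^{(k,t)}_n=T^{(k,t+1)}_n-T^{(k,t)}_{n+1}+T^{(k+1,t)}_{n+1}-T^{(k+1,t+1)}_n\quad(0\le n\le N-1),\\ E^{(k,t)}_n=T^{(k,t)}_{n+2}-T^{(k,t)}_{n+1}+T^{(k+M,t)}_n-T^{(k+M,t)}_{n+1},\quad \tilde E^{(k,t)}_n=T^{(k,t)}_{n+2}-T^{(k,t)}_{n+1}+T^{(k,t+1)}_n-T^{(k,t+1)}_{n+1},\\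 F^{(k,t)}_n=T^{(k,t)}_{n+2}-T^{(k,t+1)}_{n+1}+T^{(k+M,t+1)}_n-T^{(k+M,t)}_{n+1}+S^{(t)}\quad(0\le n\le N-1). \end{gather*} Then these give a solution of the nonautonomous ultradiscrete hungry Toda lattice with the finite lattice condition: for all $k,t\in\mathbb Z$, $E^{(k,t)}_{N-1}=\tilde E^{(k,t)}_{N-1}=+\infty$ and \begin{gather*} Q^{(k,t+1)}_n=\min(D^{(k,t)}_n,\tilde E^{(k,t)}_n)\ (0\le n\le N-1),\qquad E^{(k,t+1)}_n=\min(F^{(k,t)}_n,\tilde E^{(k+M,t)}_n)\ (0\le n\le N-2),\\ D^{(k,t)}_{n+1}=D^{(k,t)}_n-Q^{(k,t+1)}_n+Q^{(k,t)}_{n+1},\qquad \tilde E^{(k+1,t)}_n=\tilde E^{(k,t)}_n-Q^{(k,t+1)}_n+Q^{(k,t)}_{n+1}\qquad(0\le n\le N-2),\\ F^{(k,t)}_{n+1}=F^{(k,t)}_n-E^{(k,t+1)}_n+E^{(k,t)}_{n+1},\qquad \tilde E^{(k,t)}_{n+1}=\tilde E^{(k+M,t)}_n-E^{(k,t+1)}_n+E^{(k,t)}_{n+1}\qquad(0\le n\le N-2), \end{gather*} with boundary conditions \[ D^{(k,t)}_0=Q^{(k,t)}_0,\quad F^{(k,t)}_0=E^{(k,t)}_0+\max\Big(0,S^{(t)}-\sum_{j=0}^{M-1}Q^{(k+j,t)}_0\Big),\quad \tilde E^{(k,t)}_0=E^{(k,t)}_0+\max\Big(0,\sum_{j=0}^{M-1}Q^{(k+j,t)}_0-S^{(t)}\Big).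 \]
   Context: Arithmetic with $+\infty$: $a+\infty=+\infty$ for $a\in\mathbb R\cup\{+\infty\}$, $\min(a,+\infty)=a$; expressions containing $+\infty$ with a minus sign occur only as $(+\infty)-a$ with $a$ finite, which equals $+\infty$. Sums $\sum_{\tau=0}^{t-1}a_\tau$ equal $0$ for $t=0$ and $-\sum_{\tau=t}^{-1}a_\tau$ for $t<0$. *)

theory Defs
  imports Complex_Main "HOL-Library.Extended_Real"
begin

definition sumS :: "(int \<Rightarrow> real) \<Rightarrow> int \<Rightarrow> real \<Rightarrow> real" where
  "sumS S t x = (if 0 \<le> t then (\<Sum>\<tau>\<in>{0..<t}. min x (S \<tau>))
                 else - (\<Sum>\<tau>\<in>{t..<0}. min x (S \<tau>)))"

definition incr_lists :: "nat \<Rightarrow> nat \<Rightarrow> nat list set" where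
  "incr_lists N n = {rs. length rs = n \<and> sorted_wrt (<) rs \<and> (\<forall>r\<in>set rs. r < N)}"

definition Tval :: "(int \<Rightarrow> nat \<Rightarrow> real) \<Rightarrow> (nat \<Rightarrow> real) \<Rightarrow> (int \<Rightarrow> real) \<Rightarrow> nat \<Rightarrow>
    int \<Rightarrow> int \<Rightarrow> nat \<Rightarrow> nat list \<Rightarrow> real" where
  "Tval W Z S M k t n rs = (\<Sum>j<n. W (k + int j) (rs ! j)
      + (real_of_int k + real (M + 1) * real j) / real M * Z (rs ! j)
      + sumS S t (Z (rs ! j)))"

definition T :: "(int \<Rightarrow> nat \<Rightarrow> real) \<Rightarrow> (nat \<Rightarrow> real) \<Rightarrow> (int \<Rightarrow> real) \<Rightarrow> nat \<Rightarrow> nat \<Rightarrow>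
    int \<Rightarrow> int \<Rightarrow> nat \<Rightarrow> ereal" where
  "T W Z S M N k t n =
     (if n = 0 then 0
      else if n \<le> N then ereal (Min (Tval W Z S M k t n ` incr_lists N n))
      else \<infinity>)"

definition Qf where
  "Qf W Z S M N k t n = T W Z S M N k t n - T W Z S M N k t (n+1)
      + T W Z S M N (k+1) t (n+1) - T W Z S M N (k+1) t n"

definition Df where
  "Df W Z S M N k t n = T W Z S M N k (t+1) n - T W Z S M N k t (n+1)
      + T W Z S M N (k+1) t (n+1) - T W Z S M N (k+1) (t+1) n"

definition Ef where
  "Ef W Z S M N k t n = T W Z S M N k t (n+2) - T W Z S M N k t (n+1)
      + T W Z S M N (k + int M) t n - T W Z S M N (k + int M) t (n+1)"

definition Etf where
  "Etf W Z S M N k t n = T W Z S M N k t (n+2) - T W Z S M N k t (n+1)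
      + T W Z S M N k (t+1) n - T W Z S M N k (t+1) (n+1)"

definition Ff where
  "Ff W Z S M N k t n = T W Z S M N k t (n+2) - T W Z S M N k (t+1) (n+1)
      + T W Z S M N (k + int M) (t+1) n - T W Z S M N (k + int M) t (n+1) + ereal (S t)"

end

theory Submission
  imports Defs
begin

definition lD :: "nat \<Rightarrow> nat \<times> nat" where "lD j = (j, j)"
definition lL :: "nat \<Rightarrow> nat \<times> nat" where "lL j = (Suc j, j)"
definition lU :: "nat \<Rightarrow> nat \<times> nat" where "lU j = (j, Suc j)"
definition lW :: "nat \<Rightarrow> nat \<times> nat" where "lW j = (j, Suc (Suc j))"
definition gp :: "(nat \<Rightarrow> nat \<times> nat) \<Rightarrow> (nat \<Rightarrow> nat \<times> nat) \<Rightarrow> nat \<Rightarrow> nat \<Rightarrow> nat \<times> nat"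
  where "gp b b' i j = (if j < i then b j else b' j)"
definition lDs :: "nat \<Rightarrow> nat \<times> nat" where "lDs j = (Suc j, Suc j)"

locale frame =
  fixes N :: nat and X :: "nat \<Rightarrow> nat \<Rightarrow> real" and Z :: "nat \<Rightarrow> real"
  assumes Xmonge: "\<And>\<rho> r0 r1. r0 \<le> r1 \<Longrightarrow> r1 < N \<Longrightarrow>
      X (Suc \<rho>) r1 - X \<rho> r1 \<le> X (Suc \<rho>) r0 - X \<rho> r0"
    and Zmon: "\<And>i j. i \<le> j \<Longrightarrow> j < N \<Longrightarrow> Z j \<le> Z i"
begin

definition K :: "nat \<times> nat \<Rightarrow> nat \<Rightarrow> real" where
  "K p r = X (fst p) r + real (snd p) * Z r"

definition Cs :: "(nat \<Rightarrow> nat \<times> nat) \<Rightarrow> nat \<Rightarrow> (nat \<Rightarrow> nat) \<Rightarrow> real" where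
  "Cs pos n f = (\<Sum>j<n. K (pos j) (f j))"

definition inc :: "nat \<Rightarrow> (nat \<Rightarrow> nat) \<Rightarrow> bool" where
  "inc n f \<longleftrightarrow> (\<forall>i j. i < j \<longrightarrow> j < n \<longrightarrow> f i < f j) \<and> (\<forall>j<n. f j < N)"

lemma Xmonge2:
  assumes "\<rho> \<le> \<rho>'" "r0 \<le> r1" "r1 < N"
  shows "X \<rho>' r1 - X \<rho> r1 \<le> X \<rho>' r0 - X \<rho> r0"
  using assms(1)
proof (induction \<rho>' rule: dec_induct)
  case base then show ?case by simp
next
  case (step m)
  have "X (Suc m) r1 - X m r1 \<le> X (Suc m) r0 - X m r0" using Xmonge assms by blast
  then show ?case using step by linarith
qed

lemma Kmonge:
  assumes "fst p \<le> fst q" "snd p \<le> snd q" "r0 \<le> r1" "r1 < N"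
  shows "K p r0 + K q r1 \<le> K p r1 + K q r0"
proof -
  have x: "X (fst q) r1 - X (fst p) r1 \<le> X (fst q) r0 - X (fst p) r0"
    using Xmonge2 assms by blast
  have z: "Z r1 \<le> Z r0" using Zmon assms by blast
  have "real (snd q) * Z r1 - real (snd p) * Z r1 \<le> real (snd q) * Z r0 - real (snd p) * Z r0"
  proof -
    have "(real (snd q) - real (snd p)) * Z r1 \<le> (real (snd q) - real (snd p)) * Z r0"
      using z assms(2) by (intro mult_left_mono) auto
    then show ?thesis by (simp add: algebra_simps)
  qed
  then show ?thesis using x unfolding K_def by linarith
qed

lemma mm:
  assumes "fst lo \<le> fst hi" "snd lo \<le> snd hi" "a < N" "b < N"
  shows "K hi (max a b) + K lo (min a b) \<le> K hi a + K lo b"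
proof (cases "a \<le> b")
  case True
  then have "K lo a + K hi b \<le> K lo b + K hi a" using Kmonge[OF assms(1,2) True assms(4)] by simp
  then show ?thesis using True by (simp add: max_def min_def)
next
  case False then show ?thesis by (simp add: max_def min_def)
qed

lemma inc_mono: "inc n f \<Longrightarrow> i \<le> j \<Longrightarrow> j < n \<Longrightarrow> f i \<le> f j"
  unfolding inc_def by (metis le_less)

lemma inc_bound: "inc n f \<Longrightarrow> j < n \<Longrightarrow> f j < N"
  unfolding inc_def by blast

lemma inc_ge: "inc n f \<Longrightarrow> j < n \<Longrightarrow> j \<le> f j"
proof (induction j)
  case 0 then show ?case by simp
next
  case (Suc j)
  then have "f j < f (Suc j)" unfolding inc_def by auto
  then show ?case using Suc by simp
qed

lemma inc_le_N: "inc n f \<Longrightarrow> n \<le> N"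
proof (cases n)
  case 0 then show ?thesis by simp
next
  case (Suc m)
  assume a: "inc n f"
  then have "m \<le> f m" using inc_ge Suc by simp
  moreover have "f m < N" using inc_bound a Suc by simp
  ultimately show ?thesis using Suc by simp
qed

lemma inc_minmax:
  assumes "inc n f" "inc n g"
  shows "inc n (\<lambda>j. min (f j) (g j))" "inc n (\<lambda>j. max (f j) (g j))"
  using assms unfolding inc_def
  by (auto simp: min_less_iff_disj less_max_iff_disj) (metis less_trans not_less_iff_gr_or_eq)+

lemma max_strict: "(x::nat) < u \<Longrightarrow> y < v \<Longrightarrow> max x y < max u v" by (auto simp: max_def)
lemma min_strict: "(x::nat) < u \<Longrightarrow> y < v \<Longrightarrow> min x y < min u v" by (auto simp: min_def)

lemma K_lU: "K (lU j) r = K (lD j) r + Z r" unfolding K_def lU_def lD_def by (simp add: algebra_simps)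
lemma K_lDs: "K (lDs j) r = K (lL j) r + Z r" unfolding K_def lDs_def lL_def by (simp add: algebra_simps)
lemma K_lW: "K (lW j) r = K (lU j) r + Z r" unfolding K_def lW_def lU_def by (simp add: algebra_simps)

lemma Cs_sum: "Cs A n f + Cs B n g = (\<Sum>j<n. K (A j) (f j) + K (B j) (g j))"
  unfolding Cs_def by (simp add: sum.distrib)

lemma crossLU:
  assumes "a < N" "b < N"
  shows "K (lD j) (min a b) + K (lDs j) (max a b) \<le> K (lL j) a + K (lU j) b"
proof (cases "a \<le> b")
  case True
  have "X (Suc j) b - X j b \<le> X (Suc j) a - X j a" using Xmonge True assms by blast
  then show ?thesis using True unfolding K_def lD_def lDs_def lL_def lU_def
    by (simp add: min_def max_def algebra_simps)
next
  case False
  have "Z a \<le> Z b" using Zmon False assms by simp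
  then show ?thesis using False unfolding K_def lD_def lDs_def lL_def lU_def
    by (simp add: min_def max_def algebra_simps)
qed

lemma crossUW:
  assumes "a < N" "b < N"
  shows "K (lU (Suc j)) (max a b) + K (lU j) (min a b) \<le> K (lD (Suc j)) a + K (lW j) b"
proof (cases "a < b")
  case True
  have "X (Suc j) b - X j b \<le> X (Suc j) a - X j a" using Xmonge True assms by simp
  then show ?thesis using True unfolding K_def lD_def lW_def lU_def
    by (simp add: min_def max_def algebra_simps)
next
  case False
  have "Z a \<le> Z b" using Zmon False assms by simp
  then show ?thesis using False unfolding K_def lD_def lW_def lU_def
    by (simp add: min_def max_def algebra_simps)
qed

lemma I1_leA:
  assumes "inc s p" "inc s q"
  shows "\<exists>P Q. inc s P \<and> inc s Q \<and>
    Cs lD s P + Cs (gp lL lDs i) s Q \<le> Cs lL s p + Cs (gp lD lU i) s q"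
proof (intro exI conjI)
  show "inc s (\<lambda>j. min (p j) (q j))" "inc s (\<lambda>j. max (p j) (q j))" using inc_minmax assms by auto
  show "Cs lD s (\<lambda>j. min (p j) (q j)) + Cs (gp lL lDs i) s (\<lambda>j. max (p j) (q j))
      \<le> Cs lL s p + Cs (gp lD lU i) s q"
    unfolding Cs_sum
  proof (rule sum_mono)
    fix j assume "j \<in> {..<s}"
    then have ab: "p j < N" "q j < N" using assms inc_bound by auto
    show "K (lD j) (min (p j) (q j)) + K (gp lL lDs i j) (max (p j) (q j))
        \<le> K (lL j) (p j) + K (gp lD lU i j) (q j)"
    proof (cases "j < i")
      case True
      have "K (lL j) (max (p j) (q j)) + K (lD j) (min (p j) (q j)) \<le> K (lL j) (p j) + K (lD j) (q j)"
        by (rule mm) (use ab in \<open>auto simp: lL_def lD_def\<close>)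
      then show ?thesis using True by (simp add: gp_def)
    next
      case False
      then show ?thesis using crossLU[OF ab] by (simp add: gp_def)
    qed
  qed
qed

lemma I1_leB:
  assumes "inc (Suc (Suc m)) p" "inc m q" "i \<le> m"
  shows "\<exists>P Q. inc (Suc m) P \<and> inc (Suc m) Q \<and>
    Cs lD (Suc m) P + Cs (gp lL lDs i) (Suc m) Q \<le> Cs lD (Suc (Suc m)) p + Cs (gp lL lDs i) m q"
proof -
  define P where "P j = (case j of 0 \<Rightarrow> p 0 | Suc j' \<Rightarrow> max (p (Suc j')) (q j'))" for j
  define Q where "Q j = (if j < m then min (p (Suc j)) (q j) else p (Suc m))" for j
  have pi: "\<And>a b. a < b \<Longrightarrow> b < Suc (Suc m) \<Longrightarrow> p a < p b" and pN: "\<And>a. a < Suc (Suc m) \<Longrightarrow> p a < N"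
    using assms(1) unfolding inc_def by auto
  have qi: "\<And>a b. a < b \<Longrightarrow> b < m \<Longrightarrow> q a < q b" and qN: "\<And>a. a < m \<Longrightarrow> q a < N"
    using assms(2) unfolding inc_def by auto
  have incP: "inc (Suc m) P"
    unfolding inc_def
  proof (intro conjI allI impI)
    fix a b assume ab: "a < b" "b < Suc m"
    then obtain b' where b': "b = Suc b'" by (cases b) auto
    show "P a < P b"
    proof (cases a)
      case 0 then show ?thesis using ab b' pi[of 0 "Suc b'"] by (simp add: P_def less_max_iff_disj)
    next
      case (Suc a')
      then show ?thesis using ab b' pi[of "Suc a'" "Suc b'"] qi[of a' b']
        by (auto simp: P_def max_def)
    qed
  next
    fix j assume "j < Suc m"
    then show "P j < N" using pN qN by (cases j) (auto simp: P_def)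
  qed
  have incQ: "inc (Suc m) Q"
    unfolding inc_def
  proof (intro conjI allI impI)
    fix a b assume ab: "a < b" "b < Suc m"
    show "Q a < Q b"
    proof (cases "b < m")
      case True
      then show ?thesis using ab pi[of "Suc a" "Suc b"] qi[of a b]
        by (auto simp: Q_def min_def)
    next
      case False
      then have "b = m" using ab by simp
      then show ?thesis using ab pi[of "Suc a" "Suc m"] by (simp add: Q_def min_less_iff_disj)
    qed
  next
    fix j assume "j < Suc m"
    then show "Q j < N" using pN qN by (auto simp: Q_def min_less_iff_disj)
  qed
  have eq1: "Cs lD (Suc m) P = K (lD 0) (p 0) + (\<Sum>j<m. K (lD (Suc j)) (max (p (Suc j)) (q j)))"
    unfolding Cs_def sum.lessThan_Suc_shift by (simp add: P_def)
  have eq2: "Cs (gp lL lDs i) (Suc m) Q = (\<Sum>j<m. K (gp lL lDs i j) (min (p (Suc j)) (q j))) + K (lD (Suc m)) (p (Suc m))"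
    unfolding Cs_def using assms(3) by (simp add: Q_def gp_def lDs_def lD_def)
  have eq3: "Cs lD (Suc (Suc m)) p = K (lD 0) (p 0) + (\<Sum>j<m. K (lD (Suc j)) (p (Suc j))) + K (lD (Suc m)) (p (Suc m))"
    unfolding Cs_def sum.lessThan_Suc_shift[of _ "Suc m"] by simp
  have le: "(\<Sum>j<m. K (lD (Suc j)) (max (p (Suc j)) (q j))) + (\<Sum>j<m. K (gp lL lDs i j) (min (p (Suc j)) (q j)))
      \<le> (\<Sum>j<m. K (lD (Suc j)) (p (Suc j))) + Cs (gp lL lDs i) m q"
    unfolding Cs_def sum.distrib[symmetric]
  proof (rule sum_mono)
    fix j assume "j \<in> {..<m}"
    then have ab: "p (Suc j) < N" "q j < N" using pN qN by auto
    show "K (lD (Suc j)) (max (p (Suc j)) (q j)) + K (gp lL lDs i j) (min (p (Suc j)) (q j))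
        \<le> K (lD (Suc j)) (p (Suc j)) + K (gp lL lDs i j) (q j)"
      by (rule mm) (use ab in \<open>auto simp: gp_def lL_def lD_def lDs_def\<close>)
  qed
  show ?thesis
    by (rule exI[of _ P], rule exI[of _ Q]) (use incP incQ eq1 eq2 eq3 le in linarith)
qed

lemma I2_leB:
  assumes "inc (Suc s) p" "inc s q" "i \<le> s"
  shows "\<exists>P Q. inc (Suc s) P \<and> inc s Q \<and>
    Cs (gp lD lU i) (Suc s) P + Cs lU s Q \<le> Cs lU (Suc s) p + Cs (gp lD lU i) s q"
proof -
  define P where "P j = (if j < s then min (p j) (q j) else p s)" for j
  define Q where "Q j = max (p j) (q j)" for j
  have pi: "\<And>a b. a < b \<Longrightarrow> b < Suc s \<Longrightarrow> p a < p b" and pN: "\<And>a. a < Suc s \<Longrightarrow> p a < N"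
    using assms(1) unfolding inc_def by auto
  have qi: "\<And>a b. a < b \<Longrightarrow> b < s \<Longrightarrow> q a < q b" and qN: "\<And>a. a < s \<Longrightarrow> q a < N"
    using assms(2) unfolding inc_def by auto
  have incs: "inc s p" using assms(1) unfolding inc_def by auto
  have incQ: "inc s Q" unfolding Q_def using inc_minmax[OF incs assms(2)] by simp
  have incP: "inc (Suc s) P"
    unfolding inc_def
  proof (intro conjI allI impI)
    fix a b assume ab: "a < b" "b < Suc s"
    show "P a < P b"
    proof (cases "b < s")
      case True
      then show ?thesis using ab pi[of a b] qi[of a b]
        by (auto simp: P_def min_def)
    next
      case False
      then have "b = s" using ab by simp
      then show ?thesis using ab pi[of a s] by (simp add: P_def min_less_iff_disj)
    qed
  next
    fix j assume "j < Suc s"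
    then show "P j < N" using pN qN by (auto simp: P_def min_less_iff_disj)
  qed
  have eq1: "Cs (gp lD lU i) (Suc s) P = (\<Sum>j<s. K (gp lD lU i j) (min (p j) (q j))) + K (lU s) (p s)"
    unfolding Cs_def using assms(3) by (simp add: P_def gp_def)
  have eq2: "Cs lU (Suc s) p = (\<Sum>j<s. K (lU j) (p j)) + K (lU s) (p s)"
    unfolding Cs_def by simp
  have le: "(\<Sum>j<s. K (gp lD lU i j) (min (p j) (q j))) + Cs lU s Q
      \<le> (\<Sum>j<s. K (lU j) (p j)) + Cs (gp lD lU i) s q"
    unfolding Cs_def sum.distrib[symmetric]
  proof (rule sum_mono)
    fix j assume "j \<in> {..<s}"
    then have ab: "p j < N" "q j < N" using pN qN by auto
    have "K (lU j) (max (p j) (q j)) + K (gp lD lU i j) (min (p j) (q j)) \<le> K (lU j) (p j) + K (gp lD lU i j) (q j)"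
      by (rule mm) (use ab in \<open>auto simp: gp_def lU_def lD_def\<close>)
    then show "K (gp lD lU i j) (min (p j) (q j)) + K (lU j) (Q j) \<le> K (lU j) (p j) + K (gp lD lU i j) (q j)"
      by (simp add: Q_def)
  qed
  show ?thesis
    by (rule exI[of _ P], rule exI[of _ Q]) (use incP incQ eq1 eq2 le in linarith)
qed

lemma I2_leA:
  assumes "inc (Suc s) p" "inc s q"
  shows "\<exists>P Q. inc (Suc s) P \<and> inc s Q \<and>
    Cs (gp lD lU (Suc i)) (Suc s) P + Cs lU s Q \<le> Cs lD (Suc s) p + Cs (gp lU lW i) s q"
proof -
  define P where "P j = (case j of 0 \<Rightarrow> p 0 | Suc j' \<Rightarrow> max (p (Suc j')) (q j'))" for j
  define Q where "Q j = min (p (Suc j)) (q j)" for j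
  have pi: "\<And>a b. a < b \<Longrightarrow> b < Suc s \<Longrightarrow> p a < p b" and pN: "\<And>a. a < Suc s \<Longrightarrow> p a < N"
    using assms(1) unfolding inc_def by auto
  have qi: "\<And>a b. a < b \<Longrightarrow> b < s \<Longrightarrow> q a < q b" and qN: "\<And>a. a < s \<Longrightarrow> q a < N"
    using assms(2) unfolding inc_def by auto
  have incP: "inc (Suc s) P"
    unfolding inc_def
  proof (intro conjI allI impI)
    fix a b assume ab: "a < b" "b < Suc s"
    then obtain b' where b': "b = Suc b'" by (cases b) auto
    show "P a < P b"
    proof (cases a)
      case 0 then show ?thesis using ab b' pi[of 0 "Suc b'"] by (simp add: P_def less_max_iff_disj)
    next
      case (Suc a')
      then show ?thesis using ab b' pi[of "Suc a'" "Suc b'"] qi[of a' b']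
        by (auto simp: P_def max_def)
    qed
  next
    fix j assume "j < Suc s"
    then show "P j < N" using pN qN by (cases j) (auto simp: P_def)
  qed
  have incQ: "inc s Q"
    unfolding inc_def
  proof (intro conjI allI impI)
    fix a b assume ab: "a < b" "b < s"
    then show "Q a < Q b" using pi[of "Suc a" "Suc b"] qi[of a b]
      by (auto simp: Q_def min_def)
  next
    fix j assume "j < s"
    then show "Q j < N" using pN qN by (auto simp: Q_def min_less_iff_disj)
  qed
  have eq1: "Cs (gp lD lU (Suc i)) (Suc s) P = K (lD 0) (p 0) + (\<Sum>j<s. K (gp lD lU (Suc i) (Suc j)) (max (p (Suc j)) (q j)))"
    unfolding Cs_def sum.lessThan_Suc_shift by (simp add: P_def gp_def)
  have eq2: "Cs lD (Suc s) p = K (lD 0) (p 0) + (\<Sum>j<s. K (lD (Suc j)) (p (Suc j)))"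
    unfolding Cs_def sum.lessThan_Suc_shift by simp
  have le: "(\<Sum>j<s. K (gp lD lU (Suc i) (Suc j)) (max (p (Suc j)) (q j))) + Cs lU s Q
      \<le> (\<Sum>j<s. K (lD (Suc j)) (p (Suc j))) + Cs (gp lU lW i) s q"
    unfolding Cs_def sum.distrib[symmetric]
  proof (rule sum_mono)
    fix j assume "j \<in> {..<s}"
    then have ab: "p (Suc j) < N" "q j < N" using pN qN by auto
    show "K (gp lD lU (Suc i) (Suc j)) (max (p (Suc j)) (q j)) + K (lU j) (Q j)
        \<le> K (lD (Suc j)) (p (Suc j)) + K (gp lU lW i j) (q j)"
    proof (cases "j < i")
      case True
      have "K (lD (Suc j)) (max (p (Suc j)) (q j)) + K (lU j) (min (p (Suc j)) (q j)) \<le> K (lD (Suc j)) (p (Suc j)) + K (lU j) (q j)"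
        by (rule mm) (use ab in \<open>auto simp: lU_def lD_def\<close>)
      then show ?thesis using True by (simp add: gp_def Q_def)
    next
      case False
      then show ?thesis using crossUW[OF ab, of j] by (simp add: gp_def Q_def)
    qed
  qed
  show ?thesis
    by (rule exI[of _ P], rule exI[of _ Q]) (use incP incQ eq1 eq2 le in linarith)
qed

lemma downclosed:
  assumes "finite (A::nat set)" "\<And>j j'. j \<in> A \<Longrightarrow> j' < j \<Longrightarrow> j' \<in> A"
  shows "A = {..<card A}"
proof (cases "A = {}")
  case True then show ?thesis by simp
next
  case False
  define m where "m = Max A"
  have mA: "m \<in> A" using False assms(1) m_def by simp
  have "A = {..m}"
  proof
    show "A \<subseteq> {..m}" using assms(1) m_def by auto
    show "{..m} \<subseteq> A"
    proof
      fix j assume "j \<in> {..m}"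
      then show "j \<in> A" using mA assms(2)[of m j] by (cases "j = m") auto
    qed
  qed
  then show ?thesis by (simp add: lessThan_Suc_atMost[symmetric])
qed

lemma nat_eq_by_less: "(\<And>j::nat. j < a \<longleftrightarrow> j < b) \<Longrightarrow> a = b"
  by (metis less_irrefl linorder_neqE_nat)

definition cnt :: "nat \<Rightarrow> (nat \<Rightarrow> nat) \<Rightarrow> nat \<Rightarrow> nat" where
  "cnt n f x = card {j. j < n \<and> f j < x}"

lemma cnt_iff:
  assumes "inc n f"
  shows "j < cnt n f x \<longleftrightarrow> j < n \<and> f j < x"
proof -
  let ?A = "{j. j < n \<and> f j < x}"
  have "?A = {..<card ?A}"
  proof (rule downclosed)
    show "finite ?A" by simp
    fix j j' assume jA: "j \<in> ?A" and "j' < j"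
    then have "f j' < f j" using assms unfolding inc_def by auto
    then show "j' \<in> ?A" using jA \<open>j' < j\<close> by auto
  qed
  then have "j \<in> ?A \<longleftrightarrow> j < card ?A" by blast
  then show ?thesis unfolding cnt_def by simp
qed

lemma cnt_N: "inc n f \<Longrightarrow> cnt n f N = n"
  by (rule nat_eq_by_less) (auto simp: cnt_iff inc_def)

lemma cnt_at: "inc n f \<Longrightarrow> j < n \<Longrightarrow> cnt n f (f j) = j"
  by (rule nat_eq_by_less) (auto simp: cnt_iff inc_def, metis less_trans not_less_iff_gr_or_eq)

lemma cnt_at_Suc: "inc n f \<Longrightarrow> j < n \<Longrightarrow> cnt n f (Suc (f j)) = Suc j"
proof (rule nat_eq_by_less)
  fix i assume a: "inc n f" "j < n"
  show "i < cnt n f (Suc (f j)) \<longleftrightarrow> i < Suc j"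
  proof
    assume "i < cnt n f (Suc (f j))"
    then have "i < n" "f i \<le> f j" using a cnt_iff by auto
    then show "i < Suc j" using a unfolding inc_def by (metis leD not_less_eq)
  next
    assume "i < Suc j"
    then show "i < cnt n f (Suc (f j))" using a cnt_iff inc_mono[of n f i j] by auto
  qed
qed

lemma cnt_le: "cnt n f x \<le> n"
proof -
  have "cnt n f x \<le> card {..<n}" unfolding cnt_def by (rule card_mono) auto
  then show ?thesis by simp
qed

lemma cnt_mono: "x \<le> y \<Longrightarrow> cnt n f x \<le> cnt n f y"
  unfolding cnt_def by (rule card_mono) auto

lemma cnt_step: 
  assumes "inc n f" shows "cnt n f (Suc x) \<le> Suc (cnt n f x)"
proof (rule ccontr)
  let ?c = "cnt n f x"
  assume "\<not> ?thesis"
  then have h: "?c < cnt n f (Suc x)" "Suc ?c < cnt n f (Suc x)" by auto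
  have 1: "?c < n" "f ?c < Suc x" using h(1) cnt_iff[OF assms] by auto
  have 2: "Suc ?c < n" "f (Suc ?c) < Suc x" using h(2) cnt_iff[OF assms] by auto
  have "\<not> f ?c < x" using cnt_iff[OF assms, of ?c x] 1 by auto
  moreover have "f ?c < f (Suc ?c)" using assms 2 unfolding inc_def by auto
  ultimately show False using 1 2 by simp
qed

lemma ivt_up:
  fixes g :: "nat \<Rightarrow> int"
  assumes "\<And>z. x \<le> z \<Longrightarrow> z < y \<Longrightarrow> g (Suc z) \<le> g z + 1" "x \<le> y" "g x \<le> v" "v \<le> g y"
  shows "\<exists>z. x \<le> z \<and> z \<le> y \<and> g z = v"
  using assms(2,1,4)
proof (induction y rule: dec_induct)
  case base then show ?case using assms(3) by (intro exI[of _ x]) simp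
next
  case (step y)
  have mono: "\<And>z. x \<le> z \<Longrightarrow> z < y \<Longrightarrow> g (Suc z) \<le> g z + 1" using step.prems(1) by simp
  show ?case
  proof (cases "v \<le> g y")
    case True
    then obtain z where "x \<le> z" "z \<le> y" "g z = v" using step.IH[OF mono True] by blast
    then show ?thesis by (intro exI[of _ z]) auto
  next
    case False
    have "g (Suc y) \<le> g y + 1" using step.prems(1)[of y] step.hyps by simp
    then have "g (Suc y) = v" using False step.prems(2) by simp
    then show ?thesis using step.hyps by (intro exI[of _ "Suc y"]) auto
  qed
qed

lemma ivt_down:
  fixes g :: "nat \<Rightarrow> int"
  assumes "\<And>z. x \<le> z \<Longrightarrow> z < y \<Longrightarrow> g z \<le> g (Suc z) + 1" "x \<le> y" "v \<le> g x" "g y \<le> v"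
  shows "\<exists>z. x \<le> z \<and> z \<le> y \<and> g z = v"
proof -
  have "\<exists>z. x \<le> z \<and> z \<le> y \<and> (\<lambda>z. - g z) z = - v"
    by (rule ivt_up) (use assms in \<open>auto simp: algebra_simps\<close>)
  then show ?thesis by auto
qed

lemma sum_split: "(a::nat) \<le> n \<Longrightarrow> (\<Sum>j<n. g j) = (\<Sum>j<a. g j) + (\<Sum>j\<in>{a..<n}. g j)"
proof -
  assume "a \<le> n"
  then have "{..<n} = {..<a} \<union> {a..<n}" by auto
  then have "sum g {..<n} = sum g ({..<a} \<union> {a..<n})" by simp
  also have "\<dots> = sum g {..<a} + sum g {a..<n}" by (rule sum.union_disjoint) auto
  finally show ?thesis .
qed

lemma I1_ge_norm:
  assumes P: "inc s P" and Q: "inc s Q" and i: "i < s" and PQ: "\<And>j. j < s \<Longrightarrow> P j \<le> Q j"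
  shows "(\<exists>p q. inc s p \<and> inc s q \<and> Cs lL s p + Cs (gp lD lU i) s q \<le> Cs lD s P + Cs (gp lL lDs i) s Q)
    \<or> (\<exists>p q. inc (Suc s) p \<and> inc (s - 1) q \<and>
          Cs lD (Suc s) p + Cs (gp lL lDs i) (s - 1) q \<le> Cs lD s P + Cs (gp lL lDs i) s Q)"
proof -
  define x0 where "x0 = (if i = 0 then 0 else Suc (Q (i - 1)))"
  have QN: "\<And>j. j < s \<Longrightarrow> Q j < N" and PN: "\<And>j. j < s \<Longrightarrow> P j < N" using P Q inc_bound by auto
  have x0N: "x0 \<le> N" using QN i unfolding x0_def by (auto simp: Suc_le_eq)
  have cQP: "cnt s Q x \<le> cnt s P x" for x
  proof (rule ccontr)
    assume "\<not> ?thesis"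
    then have "cnt s P x < cnt s Q x" by simp
    then have "cnt s P x < s" "Q (cnt s P x) < x" using cnt_iff[OF Q] by auto
    then have "P (cnt s P x) < x" using PQ le_less_trans by blast
    then show False using cnt_iff[OF P, of "cnt s P x" x] \<open>cnt s P x < s\<close> by simp
  qed
  have cQx0: "i \<le> cnt s Q x" if "x0 \<le> x" for x
  proof (cases "i = 0")
    case True then show ?thesis by simp
  next
    case False
    have "j < cnt s Q x" if "j < i" for j
    proof -
      have "Q j \<le> Q (i - 1)" using inc_mono[OF Q] that i by auto
      then show ?thesis using cnt_iff[OF Q] \<open>x0 \<le> x\<close> False that i unfolding x0_def by auto
    qed
    show ?thesis
    proof (rule ccontr)
      assume "\<not> i \<le> cnt s Q x"
      then show False using \<open>\<And>j. j < i \<Longrightarrow> j < cnt s Q x\<close>[of "cnt s Q x"] by simp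
    qed
  qed
  show ?thesis
  proof (cases "\<exists>x. x0 \<le> x \<and> x \<le> N \<and> cnt s P x = Suc (cnt s Q x)")
    case True
    then obtain x where x: "x0 \<le> x" "x \<le> N" "cnt s P x = Suc (cnt s Q x)" by blast
    define b where "b = cnt s Q x"
    define a where "a = Suc b"
    have ib: "i \<le> b" using cQx0[OF x(1)] b_def by simp
    have as: "a \<le> s" using x(3) a_def b_def cnt_le[of s P x] by simp
    have Pa: "\<And>j. j < s \<Longrightarrow> P j < x \<longleftrightarrow> j < a"
    proof -
      fix j assume "j < s"
      then show "P j < x \<longleftrightarrow> j < a" using cnt_iff[OF P, of j x] x(3) a_def b_def by simp
    qed
    have Qb: "\<And>j. j < s \<Longrightarrow> Q j < x \<longleftrightarrow> j < b" using cnt_iff[OF Q] b_def by auto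
    define p where "p j = (if j < a then P j else Q (j - 1))" for j
    define q where "q j = (if j < b then Q j else P (Suc j))" for j
    have incp: "inc (Suc s) p"
      unfolding inc_def
    proof (intro conjI allI impI)
      fix j j' assume jj: "j < j'" "j' < Suc s"
      show "p j < p j'"
      proof (cases "j' < a")
        case True then show ?thesis using jj P as unfolding p_def inc_def by auto
      next
        case False
        then have "j' - 1 < s" "\<not> j' - 1 < b" using jj a_def by auto
        then have q1: "x \<le> Q (j' - 1)" using Qb[of "j' - 1"] by auto
        show ?thesis
        proof (cases "j < a")
          case True
          then have "P j < x" using Pa[of j] as by auto
          then show ?thesis using True False q1 unfolding p_def by auto
        next
          case False
          then show ?thesis using \<open>\<not> j' < a\<close> jj Q a_def unfolding p_def inc_def by auto
        qed
      qed
    next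
      fix j assume "j < Suc s"
      then show "p j < N" using PN QN as a_def unfolding p_def by auto
    qed
    have incq: "inc (s - 1) q"
      unfolding inc_def
    proof (intro conjI allI impI)
      fix j j' assume jj: "j < j'" "j' < s - 1"
      show "q j < q j'"
      proof (cases "j' < b")
        case True then show ?thesis using jj Q as unfolding q_def inc_def by auto
      next
        case False
        have "Suc j' < s" using jj by simp
        then have p1: "x \<le> P (Suc j')" using Pa[of "Suc j'"] False a_def by auto
        show ?thesis
        proof (cases "j < b")
          case True
          then have "Q j < x" using Qb[of j] as a_def by auto
          then show ?thesis using True False p1 unfolding q_def by auto
        next
          case False
          then show ?thesis using \<open>\<not> j' < b\<close> jj P unfolding q_def inc_def by auto
        qed
      qed
    next
      fix j assume "j < s - 1"
      then show "q j < N" using PN QN unfolding q_def by auto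
    qed
    have e1: "Cs lD (Suc s) p = (\<Sum>j<a. K (lD j) (P j)) + (\<Sum>j\<in>{b..<s}. K (lD (Suc j)) (Q j))"
    proof -
      have "Cs lD (Suc s) p = (\<Sum>j<a. K (lD j) (p j)) + (\<Sum>j\<in>{a..<Suc s}. K (lD j) (p j))"
        unfolding Cs_def by (rule sum_split) (use as in simp)
      also have "{a..<Suc s} = {Suc b..<Suc s}" using a_def by simp
      also have "(\<Sum>j\<in>{Suc b..<Suc s}. K (lD j) (p j)) = (\<Sum>j\<in>{b..<s}. K (lD (Suc j)) (p (Suc j)))"
        using sum.shift_bounds_nat_ivl[of "\<lambda>j. K (lD j) (p j)" b 1 s] by simp
      also have "\<dots> = (\<Sum>j\<in>{b..<s}. K (lD (Suc j)) (Q j))"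
        by (rule sum.cong) (auto simp: p_def a_def)
      moreover have "(\<Sum>j<a. K (lD j) (p j)) = (\<Sum>j<a. K (lD j) (P j))"
        by (rule sum.cong) (auto simp: p_def)
      ultimately show ?thesis by simp
    qed
    have e2: "Cs (gp lL lDs i) (s - 1) q = (\<Sum>j<b. K (gp lL lDs i j) (Q j)) + (\<Sum>j\<in>{a..<s}. K (lD j) (P j))"
    proof -
      have "Cs (gp lL lDs i) (s - 1) q = (\<Sum>j<b. K (gp lL lDs i j) (q j)) + (\<Sum>j\<in>{b..<s - 1}. K (gp lL lDs i j) (q j))"
        unfolding Cs_def by (rule sum_split) (use as a_def in simp)
      also have "(\<Sum>j\<in>{b..<s - 1}. K (gp lL lDs i j) (q j)) = (\<Sum>j\<in>{b..<s - 1}. K (lD (Suc j)) (P (Suc j)))"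
        by (rule sum.cong) (use ib in \<open>auto simp: q_def gp_def lDs_def lD_def\<close>)
      also have "\<dots> = (\<Sum>j\<in>{a..<s}. K (lD j) (P j))"
        using sum.shift_bounds_nat_ivl[of "\<lambda>j. K (lD j) (P j)" b 1 "s - 1"] as a_def by simp
      moreover have "(\<Sum>j<b. K (gp lL lDs i j) (q j)) = (\<Sum>j<b. K (gp lL lDs i j) (Q j))"
        by (rule sum.cong) (auto simp: q_def)
      ultimately show ?thesis by simp
    qed
    have e3: "Cs lD s P = (\<Sum>j<a. K (lD j) (P j)) + (\<Sum>j\<in>{a..<s}. K (lD j) (P j))"
      unfolding Cs_def by (rule sum_split[OF as])
    have e4: "Cs (gp lL lDs i) s Q = (\<Sum>j<b. K (gp lL lDs i j) (Q j)) + (\<Sum>j\<in>{b..<s}. K (lD (Suc j)) (Q j))"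
    proof -
      have "Cs (gp lL lDs i) s Q = (\<Sum>j<b. K (gp lL lDs i j) (Q j)) + (\<Sum>j\<in>{b..<s}. K (gp lL lDs i j) (Q j))"
        unfolding Cs_def by (rule sum_split) (use as a_def in simp)
      also have "(\<Sum>j\<in>{b..<s}. K (gp lL lDs i j) (Q j)) = (\<Sum>j\<in>{b..<s}. K (lD (Suc j)) (Q j))"
        by (rule sum.cong) (use ib in \<open>auto simp: gp_def lDs_def lD_def\<close>)
      finally show ?thesis .
    qed
    have "Cs lD (Suc s) p + Cs (gp lL lDs i) (s - 1) q \<le> Cs lD s P + Cs (gp lL lDs i) s Q"
      using e1 e2 e3 e4 by simp
    then show ?thesis using incp incq by blast
  next
    case False
    have d1: "cnt s P x = cnt s Q x" if hx0: "x0 \<le> x" and hxN: "x \<le> N" for x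
    proof (rule ccontr)
      assume "cnt s P x \<noteq> cnt s Q x"
      then have "int (cnt s P x) - int (cnt s Q x) \<ge> 1" using cQP[of x] by simp
      moreover have "int (cnt s P N) - int (cnt s Q N) \<le> 1" using cnt_N[OF P] cnt_N[OF Q] by simp
      moreover have "\<And>z. int (cnt s P z) - int (cnt s Q z) \<le> int (cnt s P (Suc z)) - int (cnt s Q (Suc z)) + 1"
      proof -
        fix z
        have "cnt s P z \<le> cnt s P (Suc z)" by (rule cnt_mono) simp
        moreover have "cnt s Q (Suc z) \<le> Suc (cnt s Q z)" by (rule cnt_step[OF Q])
        ultimately show "int (cnt s P z) - int (cnt s Q z) \<le> int (cnt s P (Suc z)) - int (cnt s Q (Suc z)) + 1"
          by linarith
      qed
      ultimately obtain z where z: "x \<le> z" "z \<le> N" "int (cnt s P z) - int (cnt s Q z) = 1"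
        using ivt_down[where x=x and y=N and g="\<lambda>z. int (cnt s P z) - int (cnt s Q z)" and v=1] hxN by auto
      then show False using False hx0 by auto
    qed
    have eqPQ: "P j = Q j" if "i \<le> j" "j < s" for j
    proof -
      have "x0 \<le> Q j"
      proof (cases "i = 0")
        case True then show ?thesis unfolding x0_def by simp
      next
        case False
        then have "Q (i - 1) < Q j" using Q that unfolding inc_def by auto
        then show ?thesis using False unfolding x0_def by simp
      qed
      moreover have "Q j \<le> N" using QN[of j] that by simp
      ultimately have "cnt s P (Q j) = j" using d1[of "Q j"] that cnt_at[OF Q] by simp
      then have "\<not> P j < Q j" using cnt_iff[OF P, of j "Q j"] that by simp
      then show ?thesis using PQ[OF that(2)] by simp
    qed
    have "Cs lL s Q + Cs (gp lD lU i) s P \<le> Cs lD s P + Cs (gp lL lDs i) s Q"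
      unfolding Cs_sum
    proof (rule sum_mono)
      fix j assume "j \<in> {..<s}"
      then have js: "j < s" by simp
      show "K (lL j) (Q j) + K (gp lD lU i j) (P j) \<le> K (lD j) (P j) + K (gp lL lDs i j) (Q j)"
      proof (cases "j < i")
        case True then show ?thesis by (simp add: gp_def)
      next
        case False
        then have "P j = Q j" using eqPQ js by simp
        then show ?thesis using False unfolding gp_def K_def lL_def lU_def lD_def lDs_def
          by (simp add: algebra_simps)
      qed
    qed
    then show ?thesis using P Q by blast
  qed
qed

lemma I1_ge:
  assumes P: "inc s P" and Q: "inc s Q" and i: "i < s"
  shows "(\<exists>p q. inc s p \<and> inc s q \<and> Cs lL s p + Cs (gp lD lU i) s q \<le> Cs lD s P + Cs (gp lL lDs i) s Q)
    \<or> (\<exists>p q. inc (Suc s) p \<and> inc (s - 1) q \<and>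
          Cs lD (Suc s) p + Cs (gp lL lDs i) (s - 1) q \<le> Cs lD s P + Cs (gp lL lDs i) s Q)"
proof -
  define P' where "P' j = min (P j) (Q j)" for j
  define Q' where "Q' j = max (P j) (Q j)" for j
  have P': "inc s P'" and Q': "inc s Q'" using inc_minmax[OF P Q] unfolding P'_def Q'_def by auto
  have le: "Cs lD s P' + Cs (gp lL lDs i) s Q' \<le> Cs lD s P + Cs (gp lL lDs i) s Q"
    unfolding Cs_sum
  proof (rule sum_mono)
    fix j assume "j \<in> {..<s}"
    then have ab: "Q j < N" "P j < N" using P Q inc_bound by auto
    have "K (gp lL lDs i j) (max (Q j) (P j)) + K (lD j) (min (Q j) (P j)) \<le> K (gp lL lDs i j) (Q j) + K (lD j) (P j)"
      by (rule mm) (use ab in \<open>auto simp: gp_def lL_def lD_def lDs_def\<close>)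
    then show "K (lD j) (P' j) + K (gp lL lDs i j) (Q' j) \<le> K (lD j) (P j) + K (gp lL lDs i j) (Q j)"
      by (simp add: P'_def Q'_def min.commute max.commute)
  qed
  have "\<And>j. j < s \<Longrightarrow> P' j \<le> Q' j" unfolding P'_def Q'_def by simp
  from I1_ge_norm[OF P' Q' i this] le show ?thesis by (meson order_trans)
qed

lemma gap_cost:
  assumes "\<And>j r. K (b' j) r = K (b j) r + Z r"
  shows "Cs (gp b b' i) n f = Cs b n f + (\<Sum>j\<in>{i..<n}. Z (f j))"
proof -
  have "Cs (gp b b' i) n f = (\<Sum>j<n. K (b j) (f j) + (if i \<le> j then Z (f j) else 0))"
    unfolding Cs_def by (rule sum.cong) (auto simp: gp_def assms)
  also have "\<dots> = Cs b n f + (\<Sum>j<n. if i \<le> j then Z (f j) else 0)"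
    unfolding Cs_def by (simp add: sum.distrib)
  also have "(\<Sum>j<n. if i \<le> j then Z (f j) else 0) = (\<Sum>j\<in>{..<n} \<inter> {j. i \<le> j}. Z (f j))"
    by (simp add: sum.inter_restrict)
  also have "{..<n} \<inter> {j. i \<le> j} = {i..<n}" by auto
  finally show ?thesis .
qed

lemma I2_ge_norm:
  assumes P: "inc (Suc s) P" and Q: "inc s Q" and i: "Suc i \<le> s" and PQ: "\<And>j. j < s \<Longrightarrow> P j \<le> Q j"
  shows "(\<exists>p q. inc (Suc s) p \<and> inc s q \<and> Cs lD (Suc s) p + Cs (gp lU lW i) s q \<le> Cs (gp lD lU (Suc i)) (Suc s) P + Cs lU s Q)
    \<or> (\<exists>p q. inc (Suc s) p \<and> inc s q \<and>
          Cs lU (Suc s) p + Cs (gp lD lU (Suc i)) s q \<le> Cs (gp lD lU (Suc i)) (Suc s) P + Cs lU s Q)"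
proof -
  define x0 where "x0 = Suc (Q i)"
  have QN: "\<And>j. j < s \<Longrightarrow> Q j < N" and PN: "\<And>j. j < Suc s \<Longrightarrow> P j < N" using P Q inc_bound by auto
  have cQP: "cnt s Q x \<le> cnt (Suc s) P x" for x
  proof (rule ccontr)
    assume "\<not> ?thesis"
    then have h: "cnt (Suc s) P x < cnt s Q x" by simp
    then have "cnt (Suc s) P x < s" "Q (cnt (Suc s) P x) < x" using cnt_iff[OF Q] by auto
    then have "P (cnt (Suc s) P x) < x" using PQ le_less_trans by blast
    then show False using cnt_iff[OF P, of "cnt (Suc s) P x" x] \<open>cnt (Suc s) P x < s\<close> by simp
  qed
  have cQx0: "Suc i \<le> cnt s Q x" if "x0 \<le> x" for x
  proof -
    have "j < cnt s Q x" if "j < Suc i" for j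
    proof -
      have "Q j \<le> Q i" using inc_mono[OF Q] that i by auto
      then show ?thesis using cnt_iff[OF Q] \<open>x0 \<le> x\<close> that i unfolding x0_def by auto
    qed
    show ?thesis
    proof (rule ccontr)
      assume "\<not> Suc i \<le> cnt s Q x"
      then show False using \<open>\<And>j. j < Suc i \<Longrightarrow> j < cnt s Q x\<close>[of "cnt s Q x"] by simp
    qed
  qed
  show ?thesis
  proof (cases "\<exists>x. x0 \<le> x \<and> x \<le> N \<and> cnt (Suc s) P x = cnt s Q x")
    case True
    then obtain x where x: "x0 \<le> x" "x \<le> N" "cnt (Suc s) P x = cnt s Q x" by blast
    define a where "a = cnt s Q x"
    have ia: "Suc i \<le> a" using cQx0[OF x(1)] a_def by simp
    have as: "a \<le> s" using cnt_le[of s Q x] a_def by simp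
    have Pa: "\<And>j. j < Suc s \<Longrightarrow> P j < x \<longleftrightarrow> j < a"
    proof -
      fix j assume "j < Suc s"
      then show "P j < x \<longleftrightarrow> j < a" using cnt_iff[OF P, of j x] x(3) a_def by simp
    qed
    have Qa: "\<And>j. j < s \<Longrightarrow> Q j < x \<longleftrightarrow> j < a" using cnt_iff[OF Q] a_def by auto
    define p where "p j = (if j < a then Q j else P j)" for j
    define q where "q j = (if j < a then P j else Q j)" for j
    have incp: "inc (Suc s) p"
      unfolding inc_def
    proof (intro conjI allI impI)
      fix j j' assume jj: "j < j'" "j' < Suc s"
      show "p j < p j'"
      proof (cases "j' < a")
        case True then show ?thesis using jj Q as unfolding p_def inc_def by auto
      next
        case False
        then have p1: "x \<le> P j'" using Pa[of j'] jj by auto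
        show ?thesis
        proof (cases "j < a")
          case True
          then have "Q j < x" using Qa[of j] as by auto
          then show ?thesis using True False p1 unfolding p_def by auto
        next
          case False
          then show ?thesis using \<open>\<not> j' < a\<close> jj P unfolding p_def inc_def by auto
        qed
      qed
    next
      fix j assume "j < Suc s"
      then show "p j < N" using PN QN as unfolding p_def by auto
    qed
    have incq: "inc s q"
      unfolding inc_def
    proof (intro conjI allI impI)
      fix j j' assume jj: "j < j'" "j' < s"
      show "q j < q j'"
      proof (cases "j' < a")
        case True then show ?thesis using jj P as unfolding q_def inc_def by auto
      next
        case False
        then have q1: "x \<le> Q j'" using Qa[of j'] jj by auto
        show ?thesis
        proof (cases "j < a")
          case True
          then have "P j < x" using Pa[of j] as by auto
          then show ?thesis using True False q1 unfolding q_def by auto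
        next
          case False
          then show ?thesis using \<open>\<not> j' < a\<close> jj Q unfolding q_def inc_def by auto
        qed
      qed
    next
      fix j assume "j < s"
      then show "q j < N" using PN QN unfolding q_def by auto
    qed
    let ?G = "gp lD lU (Suc i)"
    have e1: "Cs lU (Suc s) p = (\<Sum>j<a. K (lU j) (Q j)) + (\<Sum>j\<in>{a..<Suc s}. K (?G j) (P j))"
    proof -
      have "Cs lU (Suc s) p = (\<Sum>j<a. K (lU j) (p j)) + (\<Sum>j\<in>{a..<Suc s}. K (lU j) (p j))"
        unfolding Cs_def by (rule sum_split) (use as in simp)
      moreover have "(\<Sum>j<a. K (lU j) (p j)) = (\<Sum>j<a. K (lU j) (Q j))"
        by (rule sum.cong) (auto simp: p_def)
      moreover have "(\<Sum>j\<in>{a..<Suc s}. K (lU j) (p j)) = (\<Sum>j\<in>{a..<Suc s}. K (?G j) (P j))"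
        by (rule sum.cong) (use ia in \<open>auto simp: p_def gp_def\<close>)
      ultimately show ?thesis by simp
    qed
    have e2: "Cs ?G s q = (\<Sum>j<a. K (?G j) (P j)) + (\<Sum>j\<in>{a..<s}. K (lU j) (Q j))"
    proof -
      have "Cs ?G s q = (\<Sum>j<a. K (?G j) (q j)) + (\<Sum>j\<in>{a..<s}. K (?G j) (q j))"
        unfolding Cs_def by (rule sum_split) (use as in simp)
      moreover have "(\<Sum>j<a. K (?G j) (q j)) = (\<Sum>j<a. K (?G j) (P j))"
        by (rule sum.cong) (auto simp: q_def)
      moreover have "(\<Sum>j\<in>{a..<s}. K (?G j) (q j)) = (\<Sum>j\<in>{a..<s}. K (lU j) (Q j))"
        by (rule sum.cong) (use ia in \<open>auto simp: q_def gp_def\<close>)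
      ultimately show ?thesis by simp
    qed
    have e3: "Cs ?G (Suc s) P = (\<Sum>j<a. K (?G j) (P j)) + (\<Sum>j\<in>{a..<Suc s}. K (?G j) (P j))"
      unfolding Cs_def by (rule sum_split) (use as in simp)
    have e4: "Cs lU s Q = (\<Sum>j<a. K (lU j) (Q j)) + (\<Sum>j\<in>{a..<s}. K (lU j) (Q j))"
      unfolding Cs_def by (rule sum_split) (use as in simp)
    have "Cs lU (Suc s) p + Cs ?G s q \<le> Cs ?G (Suc s) P + Cs lU s Q"
      using e1 e2 e3 e4 by simp
    then show ?thesis using incp incq by blast
  next
    case False
    have d1: "Suc (cnt s Q x) \<le> cnt (Suc s) P x" if hx0: "x0 \<le> x" and hxN: "x \<le> N" for x
      using cQP[of x] False hx0 hxN by (metis le_neq_implies_less Suc_leI)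
    have PQ2: "P (Suc j) \<le> Q j" if "i \<le> j" "j < s" for j
    proof -
      have "Q i \<le> Q j" using inc_mono[OF Q] that by simp
      then have "x0 \<le> Suc (Q j)" unfolding x0_def by simp
      moreover have "Suc (Q j) \<le> N" using QN[of j] that by simp
      ultimately have "Suc (Suc j) \<le> cnt (Suc s) P (Suc (Q j))" using d1 cnt_at_Suc[OF Q that(2)] by fastforce
      then have "P (Suc j) < Suc (Q j)" using cnt_iff[OF P, of "Suc j" "Suc (Q j)"] by simp
      then show ?thesis by simp
    qed
    have c1: "Cs (gp lD lU (Suc i)) (Suc s) P = Cs lD (Suc s) P + (\<Sum>j\<in>{Suc i..<Suc s}. Z (P j))"
      by (rule gap_cost) (rule K_lU)
    have c2: "Cs (gp lU lW i) s Q = Cs lU s Q + (\<Sum>j\<in>{i..<s}. Z (Q j))"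
      by (rule gap_cost) (rule K_lW)
    have c3: "(\<Sum>j\<in>{Suc i..<Suc s}. Z (P j)) = (\<Sum>j\<in>{i..<s}. Z (P (Suc j)))"
      using sum.shift_bounds_nat_ivl[of "\<lambda>j. Z (P j)" i 1 s] by simp
    have c4: "(\<Sum>j\<in>{i..<s}. Z (Q j)) \<le> (\<Sum>j\<in>{i..<s}. Z (P (Suc j)))"
    proof (rule sum_mono)
      fix j assume "j \<in> {i..<s}"
      then show "Z (Q j) \<le> Z (P (Suc j))" using PQ2[of j] QN[of j] Zmon by auto
    qed
    have "Cs lD (Suc s) P + Cs (gp lU lW i) s Q \<le> Cs (gp lD lU (Suc i)) (Suc s) P + Cs lU s Q"
      using c1 c2 c3 c4 by simp
    then show ?thesis using P Q by blast
  qed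
qed

lemma I2_ge:
  assumes P: "inc (Suc s) P" and Q: "inc s Q" and i: "Suc i \<le> s"
  shows "(\<exists>p q. inc (Suc s) p \<and> inc s q \<and> Cs lD (Suc s) p + Cs (gp lU lW i) s q \<le> Cs (gp lD lU (Suc i)) (Suc s) P + Cs lU s Q)
    \<or> (\<exists>p q. inc (Suc s) p \<and> inc s q \<and>
          Cs lU (Suc s) p + Cs (gp lD lU (Suc i)) s q \<le> Cs (gp lD lU (Suc i)) (Suc s) P + Cs lU s Q)"
proof -
  let ?G = "gp lD lU (Suc i)"
  define P' where "P' j = (if j < s then min (P j) (Q j) else P s)" for j
  define Q' where "Q' j = max (P j) (Q j)" for j
  have pi: "\<And>a b. a < b \<Longrightarrow> b < Suc s \<Longrightarrow> P a < P b" and pN: "\<And>a. a < Suc s \<Longrightarrow> P a < N"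
    using P unfolding inc_def by auto
  have qi: "\<And>a b. a < b \<Longrightarrow> b < s \<Longrightarrow> Q a < Q b" and qN: "\<And>a. a < s \<Longrightarrow> Q a < N"
    using Q unfolding inc_def by auto
  have incs: "inc s P" using P unfolding inc_def by auto
  have Q': "inc s Q'" unfolding Q'_def using inc_minmax[OF incs Q] by simp
  have P': "inc (Suc s) P'"
    unfolding inc_def
  proof (intro conjI allI impI)
    fix a b assume ab: "a < b" "b < Suc s"
    show "P' a < P' b"
    proof (cases "b < s")
      case True
      then show ?thesis using ab pi[of a b] qi[of a b] by (auto simp: P'_def min_def)
    next
      case False
      then have "b = s" using ab by simp
      then show ?thesis using ab pi[of a s] by (simp add: P'_def min_less_iff_disj)
    qed
  next
    fix j assume "j < Suc s"
    then show "P' j < N" using pN qN by (auto simp: P'_def min_less_iff_disj)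
  qed
  have le: "Cs ?G (Suc s) P' + Cs lU s Q' \<le> Cs ?G (Suc s) P + Cs lU s Q"
  proof -
    have a1: "Cs ?G (Suc s) P' = (\<Sum>j<s. K (?G j) (min (P j) (Q j))) + K (?G s) (P s)"
      unfolding Cs_def by (simp add: P'_def)
    have a2: "Cs ?G (Suc s) P = (\<Sum>j<s. K (?G j) (P j)) + K (?G s) (P s)"
      unfolding Cs_def by simp
    have a3: "(\<Sum>j<s. K (?G j) (min (P j) (Q j))) + Cs lU s Q' \<le> (\<Sum>j<s. K (?G j) (P j)) + Cs lU s Q"
      unfolding Cs_def sum.distrib[symmetric]
    proof (rule sum_mono)
      fix j assume "j \<in> {..<s}"
      then have ab: "Q j < N" "P j < N" using pN qN by auto
      have "K (lU j) (max (Q j) (P j)) + K (?G j) (min (Q j) (P j)) \<le> K (lU j) (Q j) + K (?G j) (P j)"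
        by (rule mm) (use ab in \<open>auto simp: gp_def lU_def lD_def\<close>)
      then show "K (?G j) (min (P j) (Q j)) + K (lU j) (Q' j) \<le> K (?G j) (P j) + K (lU j) (Q j)"
        by (simp add: Q'_def min.commute max.commute)
    qed
    show ?thesis using a1 a2 a3 by simp
  qed
  have "\<And>j. j < s \<Longrightarrow> P' j \<le> Q' j" unfolding P'_def Q'_def by simp
  from I2_ge_norm[OF P' Q' i this] le show ?thesis by (meson order_trans)
qed

definition Mn :: "(nat \<Rightarrow> nat \<times> nat) \<Rightarrow> nat \<Rightarrow> real" where
  "Mn pos n = Min ((\<lambda>rs. Cs pos n (nth rs)) ` incr_lists N n)"

definition ms :: "real \<Rightarrow> nat \<Rightarrow> (nat \<Rightarrow> nat) \<Rightarrow> real" where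
  "ms Sv n f = (\<Sum>j<n. min (Z (f j)) Sv)"

definition Mm :: "real \<Rightarrow> (nat \<Rightarrow> nat \<times> nat) \<Rightarrow> nat \<Rightarrow> real" where
  "Mm Sv pos n = Min ((\<lambda>rs. Cs pos n (nth rs) + ms Sv n (nth rs)) ` incr_lists N n)"

lemma finite_incr: "finite (incr_lists N n)"
proof -
  have "incr_lists N n \<subseteq> {xs. set xs \<subseteq> {..<N} \<and> length xs = n}"
    unfolding incr_lists_def by auto
  moreover have "finite {xs. set xs \<subseteq> {..<N} \<and> length xs = n}"
    by (rule finite_lists_length_eq) simp
  ultimately show ?thesis by (rule finite_subset)
qed

lemma incr_inc: "rs \<in> incr_lists N n \<Longrightarrow> inc n (nth rs)"
  unfolding incr_lists_def inc_def by (auto simp: sorted_wrt_iff_nth_less)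

lemma inc_incr: "inc n f \<Longrightarrow> map f [0..<n] \<in> incr_lists N n"
  unfolding incr_lists_def inc_def by (auto simp: sorted_wrt_iff_nth_less)

lemma nonempty_incr: "n \<le> N \<Longrightarrow> incr_lists N n \<noteq> {}"
proof -
  assume "n \<le> N"
  then have "inc n (\<lambda>j. j)" unfolding inc_def by auto
  then show ?thesis using inc_incr by blast
qed

lemma Min_le_gen:
  assumes "inc n f" "\<And>f'. (\<And>j. j < n \<Longrightarrow> f' j = f j) \<Longrightarrow> g f' = g f"
  shows "Min ((\<lambda>rs. g (nth rs)) ` incr_lists N n) \<le> g f"
proof -
  have "map f [0..<n] \<in> incr_lists N n" using inc_incr assms(1) by blast
  moreover have "g (nth (map f [0..<n])) = g f" by (rule assms(2)) simp
  ultimately show ?thesis using finite_incr by (metis (no_types, lifting) Min_le finite_imageI image_eqI)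
qed

lemma Min_ex_gen:
  assumes "n \<le> N"
  shows "\<exists>f. inc n f \<and> Min ((\<lambda>rs. g (nth rs)) ` incr_lists N n) = g f"
proof -
  have "Min ((\<lambda>rs. g (nth rs)) ` incr_lists N n) \<in> (\<lambda>rs. g (nth rs)) ` incr_lists N n"
    using finite_incr nonempty_incr[OF assms] by (intro Min_in) auto
  then obtain rs where "rs \<in> incr_lists N n" "Min ((\<lambda>rs. g (nth rs)) ` incr_lists N n) = g (nth rs)" by auto
  then show ?thesis using incr_inc by blast
qed

lemma Cs_cong: "(\<And>j. j < n \<Longrightarrow> f' j = f j) \<Longrightarrow> Cs pos n f' = Cs pos n f"
  unfolding Cs_def by (rule sum.cong) auto

lemma ms_cong: "(\<And>j. j < n \<Longrightarrow> f' j = f j) \<Longrightarrow> ms Sv n f' = ms Sv n f"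
  unfolding ms_def by (rule sum.cong) auto

lemma Mn_le: "inc n f \<Longrightarrow> Mn pos n \<le> Cs pos n f"
  unfolding Mn_def by (rule Min_le_gen) (auto intro: Cs_cong)

lemma Mn_ex: "n \<le> N \<Longrightarrow> \<exists>f. inc n f \<and> Mn pos n = Cs pos n f"
  unfolding Mn_def by (rule Min_ex_gen)

lemma Mm_le: assumes "inc n f" shows "Mm Sv pos n \<le> Cs pos n f + ms Sv n f"
  unfolding Mm_def
proof (rule Min_le_gen[where g="\<lambda>f. Cs pos n f + ms Sv n f", OF assms])
  fix f' assume h: "\<And>j. j < n \<Longrightarrow> f' j = f j"
  show "Cs pos n f' + ms Sv n f' = Cs pos n f + ms Sv n f" using Cs_cong[OF h] ms_cong[OF h] by simp
qed

lemma Mm_ex: "n \<le> N \<Longrightarrow> \<exists>f. inc n f \<and> Mm Sv pos n = Cs pos n f + ms Sv n f"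
  unfolding Mm_def by (rule Min_ex_gen[where g="\<lambda>f. Cs pos n f + ms Sv n f"])

lemma ms_le:
  assumes "i \<le> n"
  shows "ms Sv n f \<le> real i * Sv + (\<Sum>j\<in>{i..<n}. Z (f j))"
proof -
  have "ms Sv n f = (\<Sum>j<i. min (Z (f j)) Sv) + (\<Sum>j\<in>{i..<n}. min (Z (f j)) Sv)"
    unfolding ms_def by (rule sum_split[OF assms])
  moreover have "(\<Sum>j<i. min (Z (f j)) Sv) \<le> (\<Sum>j<i. Sv)" by (rule sum_mono) simp
  moreover have "(\<Sum>j\<in>{i..<n}. min (Z (f j)) Sv) \<le> (\<Sum>j\<in>{i..<n}. Z (f j))" by (rule sum_mono) simp
  ultimately show ?thesis by simp
qed

lemma ms_eq:
  assumes "inc n f"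
  shows "\<exists>i\<le>n. ms Sv n f = real i * Sv + (\<Sum>j\<in>{i..<n}. Z (f j))"
proof -
  let ?A = "{j. j < n \<and> Sv < Z (f j)}"
  have A: "?A = {..<card ?A}"
  proof (rule downclosed)
    show "finite ?A" by simp
    fix j j' assume jA: "j \<in> ?A" and "j' < j"
    then have "f j' \<le> f j" using inc_mono[OF assms] by auto
    then have "Z (f j) \<le> Z (f j')" using Zmon inc_bound[OF assms] jA by auto
    then show "j' \<in> ?A" using jA \<open>j' < j\<close> by auto
  qed
  define i where "i = card ?A"
  have iff: "\<And>j. j < n \<Longrightarrow> Sv < Z (f j) \<longleftrightarrow> j < i"
  proof -
    fix j assume "j < n"
    have "j \<in> ?A \<longleftrightarrow> j < i" using A i_def by blast
    then show "Sv < Z (f j) \<longleftrightarrow> j < i" using \<open>j < n\<close> by simp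
  qed
  have "i \<le> n" unfolding i_def by (rule card_mono[of "{..<n}", simplified]) auto
  have "ms Sv n f = (\<Sum>j<i. min (Z (f j)) Sv) + (\<Sum>j\<in>{i..<n}. min (Z (f j)) Sv)"
    unfolding ms_def by (rule sum_split[OF \<open>i \<le> n\<close>])
  also have "(\<Sum>j<i. min (Z (f j)) Sv) = (\<Sum>j<i. Sv)"
    by (rule sum.cong) (use iff \<open>i \<le> n\<close> in auto)
  also have "(\<Sum>j\<in>{i..<n}. min (Z (f j)) Sv) = (\<Sum>j\<in>{i..<n}. Z (f j))"
  proof (rule sum.cong)
    fix x assume "x \<in> {i..<n}"
    then have "\<not> Sv < Z (f x)" using iff[of x] by auto
    then show "min (Z (f x)) Sv = Z (f x)" by simp
  qed simp
  finally show ?thesis using \<open>i \<le> n\<close> by auto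
qed

lemma Mm_le_gap:
  assumes "inc n f" "i \<le> n" "\<And>j r. K (b' j) r = K (b j) r + Z r"
  shows "Mm Sv b n \<le> real i * Sv + Cs (gp b b' i) n f"
  using Mm_le[OF assms(1), where Sv=Sv and pos=b] ms_le[OF assms(2), where Sv=Sv and f=f]
    gap_cost[where b=b and b'=b', OF assms(3), where i=i and n=n and f=f] by simp

lemma Mm_gap_ex:
  assumes "n \<le> N" "\<And>j r. K (b' j) r = K (b j) r + Z r"
  shows "\<exists>f i. inc n f \<and> i \<le> n \<and> Mm Sv b n = real i * Sv + Cs (gp b b' i) n f"
proof -
  obtain f where f: "inc n f" "Mm Sv b n = Cs b n f + ms Sv n f" using Mm_ex[OF assms(1)] by blast
  obtain i where "i \<le> n" "ms Sv n f = real i * Sv + (\<Sum>j\<in>{i..<n}. Z (f j))" using ms_eq[OF f(1)] by blast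
  moreover have "Cs (gp b b' i) n f = Cs b n f + (\<Sum>j\<in>{i..<n}. Z (f j))"
    by (rule gap_cost[where b=b and b'=b', OF assms(2)])
  ultimately have "Mm Sv b n = real i * Sv + Cs (gp b b' i) n f" using f by simp
  then show ?thesis using f(1) \<open>i \<le> n\<close> by blast
qed

lemma gp_full: "Cs (gp b b' n) n f = Cs b n f"
  unfolding Cs_def by (rule sum.cong) (auto simp: gp_def)

lemma gp_zero: "Cs (gp b b' 0) n f = Cs b' n f"
  unfolding Cs_def by (rule sum.cong) (auto simp: gp_def)

lemma I1_real:
  assumes "1 \<le> s" "s \<le> N"
  shows "Mn lD s + Mm Sv lL s \<le> Mn lL s + Mm Sv lD s"
    and "Suc s \<le> N \<Longrightarrow> Mn lD s + Mm Sv lL s \<le> Mn lD (Suc s) + Mm Sv lL (s - 1)"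
    and "Mn lL s + Mm Sv lD s \<le> Mn lD s + Mm Sv lL s \<or>
         (Suc s \<le> N \<and> Mn lD (Suc s) + Mm Sv lL (s - 1) \<le> Mn lD s + Mm Sv lL s)"
proof -
  show "Mn lD s + Mm Sv lL s \<le> Mn lL s + Mm Sv lD s"
  proof -
    obtain p where p: "inc s p" "Mn lL s = Cs lL s p" using Mn_ex[OF assms(2)] by blast
    obtain q i where q: "inc s q" "i \<le> s" "Mm Sv lD s = real i * Sv + Cs (gp lD lU i) s q"
      using Mm_gap_ex[where b=lD and b'=lU, OF assms(2) K_lU] by blast
    obtain P Q where PQ: "inc s P" "inc s Q" "Cs lD s P + Cs (gp lL lDs i) s Q \<le> Cs lL s p + Cs (gp lD lU i) s q"
      using I1_leA[OF p(1) q(1)] by blast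
    have "Mn lD s \<le> Cs lD s P" by (rule Mn_le[OF PQ(1)])
    moreover have "Mm Sv lL s \<le> real i * Sv + Cs (gp lL lDs i) s Q" by (rule Mm_le_gap[where b=lL and b'=lDs, OF PQ(2) q(2) K_lDs])
    ultimately show ?thesis using p q PQ by simp
  qed
next
  assume sN: "Suc s \<le> N"
  obtain m where m: "s = Suc m" using assms(1) by (cases s) auto
  obtain p where p: "inc (Suc (Suc m)) p" "Mn lD (Suc s) = Cs lD (Suc (Suc m)) p" using Mn_ex[OF sN] m by blast
  obtain q i where q: "inc m q" "i \<le> m" "Mm Sv lL m = real i * Sv + Cs (gp lL lDs i) m q"
    using Mm_gap_ex[of m lDs lL Sv] K_lDs assms m by fastforce
  obtain P Q where PQ: "inc (Suc m) P" "inc (Suc m) Q"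
      "Cs lD (Suc m) P + Cs (gp lL lDs i) (Suc m) Q \<le> Cs lD (Suc (Suc m)) p + Cs (gp lL lDs i) m q"
    using I1_leB[OF p(1) q(1,2)] by blast
  have "Mn lD s \<le> Cs lD (Suc m) P" using Mn_le[OF PQ(1)] m by simp
  moreover have "Mm Sv lL s \<le> real i * Sv + Cs (gp lL lDs i) (Suc m) Q" using Mm_le_gap[OF PQ(2) _ K_lDs, of i] q(2) m by simp
  ultimately show "Mn lD s + Mm Sv lL s \<le> Mn lD (Suc s) + Mm Sv lL (s - 1)" using p q PQ m by simp
next
  obtain P where P: "inc s P" "Mn lD s = Cs lD s P" using Mn_ex[OF assms(2)] by blast
  obtain Q i where Q: "inc s Q" "i \<le> s" "Mm Sv lL s = real i * Sv + Cs (gp lL lDs i) s Q"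
    using Mm_gap_ex[where b=lL and b'=lDs, OF assms(2) K_lDs] by blast
  show "Mn lL s + Mm Sv lD s \<le> Mn lD s + Mm Sv lL s \<or>
         (Suc s \<le> N \<and> Mn lD (Suc s) + Mm Sv lL (s - 1) \<le> Mn lD s + Mm Sv lL s)"
  proof (cases "i = s")
    case True
    have "Mn lL s \<le> Cs lL s Q" by (rule Mn_le[OF Q(1)])
    moreover have "Mm Sv lD s \<le> real s * Sv + Cs (gp lD lU s) s P" by (rule Mm_le_gap[where b=lD and b'=lU, OF P(1) _ K_lU]) simp
    ultimately have "Mn lL s + Mm Sv lD s \<le> Mn lD s + Mm Sv lL s"
      using P Q True gp_full[of lD lU s P] gp_full[of lL lDs s Q] by simp
    then show ?thesis by blast
  next
    case False
    then have "i < s" using Q(2) by simp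
    from I1_ge[OF P(1) Q(1) this] show ?thesis
    proof
      assume "\<exists>p q. inc s p \<and> inc s q \<and> Cs lL s p + Cs (gp lD lU i) s q \<le> Cs lD s P + Cs (gp lL lDs i) s Q"
      then obtain p q where pq: "inc s p" "inc s q" "Cs lL s p + Cs (gp lD lU i) s q \<le> Cs lD s P + Cs (gp lL lDs i) s Q" by blast
      have "Mn lL s \<le> Cs lL s p" by (rule Mn_le[OF pq(1)])
      moreover have "Mm Sv lD s \<le> real i * Sv + Cs (gp lD lU i) s q" by (rule Mm_le_gap[where b=lD and b'=lU, OF pq(2) Q(2) K_lU])
      ultimately show ?thesis using P Q pq by simp
    next
      assume "\<exists>p q. inc (Suc s) p \<and> inc (s - 1) q \<and>
          Cs lD (Suc s) p + Cs (gp lL lDs i) (s - 1) q \<le> Cs lD s P + Cs (gp lL lDs i) s Q"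
      then obtain p q where pq: "inc (Suc s) p" "inc (s - 1) q"
          "Cs lD (Suc s) p + Cs (gp lL lDs i) (s - 1) q \<le> Cs lD s P + Cs (gp lL lDs i) s Q" by blast
      have "Suc s \<le> N" by (rule inc_le_N[OF pq(1)])
      moreover have "Mn lD (Suc s) \<le> Cs lD (Suc s) p" by (rule Mn_le[OF pq(1)])
      moreover have "Mm Sv lL (s - 1) \<le> real i * Sv + Cs (gp lL lDs i) (s - 1) q"
        by (rule Mm_le_gap[where b=lL and b'=lDs, OF pq(2) _ K_lDs]) (use \<open>i < s\<close> in simp)
      ultimately show ?thesis using P Q pq by simp
    qed
  qed
qed

lemma I2_real:
  assumes "Suc s \<le> N"
  shows "Mm Sv lD (Suc s) + Mn lU s \<le> Mn lD (Suc s) + Mm Sv lU s + Sv"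
    and "Mm Sv lD (Suc s) + Mn lU s \<le> Mn lU (Suc s) + Mm Sv lD s"
    and "Mn lD (Suc s) + Mm Sv lU s + Sv \<le> Mm Sv lD (Suc s) + Mn lU s \<or>
         Mn lU (Suc s) + Mm Sv lD s \<le> Mm Sv lD (Suc s) + Mn lU s"
proof -
  have sN: "s \<le> N" using assms by simp
  show "Mm Sv lD (Suc s) + Mn lU s \<le> Mn lD (Suc s) + Mm Sv lU s + Sv"
  proof -
    obtain p where p: "inc (Suc s) p" "Mn lD (Suc s) = Cs lD (Suc s) p" using Mn_ex[OF assms] by blast
    obtain q i where q: "inc s q" "i \<le> s" "Mm Sv lU s = real i * Sv + Cs (gp lU lW i) s q"
      using Mm_gap_ex[where b=lU and b'=lW, OF sN K_lW] by blast
    obtain P Q where PQ: "inc (Suc s) P" "inc s Q"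
        "Cs (gp lD lU (Suc i)) (Suc s) P + Cs lU s Q \<le> Cs lD (Suc s) p + Cs (gp lU lW i) s q"
      using I2_leA[OF p(1) q(1)] by blast
    have "Mm Sv lD (Suc s) \<le> real (Suc i) * Sv + Cs (gp lD lU (Suc i)) (Suc s) P"
      by (rule Mm_le_gap[where b=lD and b'=lU, OF PQ(1) _ K_lU]) (use q(2) in simp)
    moreover have "Mn lU s \<le> Cs lU s Q" by (rule Mn_le[OF PQ(2)])
    ultimately show ?thesis using p q PQ by (simp add: algebra_simps)
  qed
  show "Mm Sv lD (Suc s) + Mn lU s \<le> Mn lU (Suc s) + Mm Sv lD s"
  proof -
    obtain p where p: "inc (Suc s) p" "Mn lU (Suc s) = Cs lU (Suc s) p" using Mn_ex[OF assms] by blast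
    obtain q i where q: "inc s q" "i \<le> s" "Mm Sv lD s = real i * Sv + Cs (gp lD lU i) s q"
      using Mm_gap_ex[where b=lD and b'=lU, OF sN K_lU] by blast
    obtain P Q where PQ: "inc (Suc s) P" "inc s Q"
        "Cs (gp lD lU i) (Suc s) P + Cs lU s Q \<le> Cs lU (Suc s) p + Cs (gp lD lU i) s q"
      using I2_leB[OF p(1) q(1,2)] by blast
    have "Mm Sv lD (Suc s) \<le> real i * Sv + Cs (gp lD lU i) (Suc s) P"
      by (rule Mm_le_gap[where b=lD and b'=lU, OF PQ(1) _ K_lU]) (use q(2) in simp)
    moreover have "Mn lU s \<le> Cs lU s Q" by (rule Mn_le[OF PQ(2)])
    ultimately show ?thesis using p q PQ by simp
  qed
  obtain P i where P: "inc (Suc s) P" "i \<le> Suc s" "Mm Sv lD (Suc s) = real i * Sv + Cs (gp lD lU i) (Suc s) P"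
    using Mm_gap_ex[where b=lD and b'=lU, OF assms K_lU] by blast
  obtain Q where Q: "inc s Q" "Mn lU s = Cs lU s Q" using Mn_ex[OF sN] by blast
  show "Mn lD (Suc s) + Mm Sv lU s + Sv \<le> Mm Sv lD (Suc s) + Mn lU s \<or>
         Mn lU (Suc s) + Mm Sv lD s \<le> Mm Sv lD (Suc s) + Mn lU s"
  proof (cases "i = 0")
    case True
    have "Mn lU (Suc s) \<le> Cs lU (Suc s) P" by (rule Mn_le[OF P(1)])
    moreover have "Mm Sv lD s \<le> real 0 * Sv + Cs (gp lD lU 0) s Q" by (rule Mm_le_gap[where b=lD and b'=lU, OF Q(1) _ K_lU]) simp
    ultimately show ?thesis using P Q True gp_zero[of lD lU s Q] gp_zero[of lD lU "Suc s" P] by simp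
  next
    case False
    then obtain i' where i': "i = Suc i'" by (cases i) auto
    show ?thesis
    proof (cases "i = Suc s")
      case True
      have "Mn lD (Suc s) \<le> Cs lD (Suc s) P" by (rule Mn_le[OF P(1)])
      moreover have "Mm Sv lU s \<le> real s * Sv + Cs (gp lU lW s) s Q" by (rule Mm_le_gap[where b=lU and b'=lW, OF Q(1) _ K_lW]) simp
      ultimately have "Mn lD (Suc s) + Mm Sv lU s + Sv \<le> Mm Sv lD (Suc s) + Mn lU s"
        using P Q True gp_full[of lD lU "Suc s" P] gp_full[of lU lW s Q] by (simp add: algebra_simps)
      then show ?thesis by blast
    next
      case False
      then have i's: "Suc i' \<le> s" using P(2) i' by simp
      from I2_ge[OF P(1) Q(1) i's] show ?thesis
      proof
        assume "\<exists>p q. inc (Suc s) p \<and> inc s q \<and> Cs lD (Suc s) p + Cs (gp lU lW i') s q \<le> Cs (gp lD lU (Suc i')) (Suc s) P + Cs lU s Q"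
        then obtain p q where pq: "inc (Suc s) p" "inc s q"
          "Cs lD (Suc s) p + Cs (gp lU lW i') s q \<le> Cs (gp lD lU (Suc i')) (Suc s) P + Cs lU s Q" by blast
        have "Mn lD (Suc s) \<le> Cs lD (Suc s) p" by (rule Mn_le[OF pq(1)])
        moreover have "Mm Sv lU s \<le> real i' * Sv + Cs (gp lU lW i') s q" by (rule Mm_le_gap[where b=lU and b'=lW, OF pq(2) _ K_lW]) (use i's in simp)
        ultimately show ?thesis using P Q pq i' by (simp add: algebra_simps)
      next
        assume "\<exists>p q. inc (Suc s) p \<and> inc s q \<and>
          Cs lU (Suc s) p + Cs (gp lD lU (Suc i')) s q \<le> Cs (gp lD lU (Suc i')) (Suc s) P + Cs lU s Q"
        then obtain p q where pq: "inc (Suc s) p" "inc s q"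
          "Cs lU (Suc s) p + Cs (gp lD lU (Suc i')) s q \<le> Cs (gp lD lU (Suc i')) (Suc s) P + Cs lU s Q" by blast
        have "Mn lU (Suc s) \<le> Cs lU (Suc s) p" by (rule Mn_le[OF pq(1)])
        moreover have "Mm Sv lD s \<le> real (Suc i') * Sv + Cs (gp lD lU (Suc i')) s q" by (rule Mm_le_gap[where b=lD and b'=lU, OF pq(2) i's K_lU])
        ultimately show ?thesis using P Q pq i' by simp
      qed
    qed
  qed
qed

end

definition tau :: "(int \<Rightarrow> nat \<Rightarrow> real) \<Rightarrow> (nat \<Rightarrow> real) \<Rightarrow> (int \<Rightarrow> real) \<Rightarrow> nat \<Rightarrow> nat \<Rightarrow>
    int \<Rightarrow> int \<Rightarrow> nat \<Rightarrow> real" where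
  "tau W Z S M N k t n = Min (Tval W Z S M k t n ` incr_lists N n)"

definition Xf :: "(int \<Rightarrow> nat \<Rightarrow> real) \<Rightarrow> (nat \<Rightarrow> real) \<Rightarrow> (int \<Rightarrow> real) \<Rightarrow> nat \<Rightarrow>
    int \<Rightarrow> int \<Rightarrow> nat \<Rightarrow> nat \<Rightarrow> real" where
  "Xf W Z S M k t \<rho> r = W (k + int \<rho>) r + real_of_int (k + int \<rho>) / real M * Z r + sumS S t (Z r)"

lemma min_char: "(x::real) \<le> y \<Longrightarrow> x \<le> z \<Longrightarrow> x = y \<or> x = z \<Longrightarrow> x = min y z"
  by (auto simp: min_def)

lemma incr0: "incr_lists N 0 = {[]}"
  unfolding incr_lists_def by auto

lemma T_fin: "n \<le> N \<Longrightarrow> T W Z S M N k t n = ereal (tau W Z S M N k t n)"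
  unfolding T_def tau_def by (auto simp: incr0 Tval_def)

lemma T_inf: "N < n \<Longrightarrow> T W Z S M N k t n = \<infinity>"
  unfolding T_def by auto

lemma sumS_step: "sumS S (t+1) x = sumS S t x + min x (S t)"
proof (cases "0 \<le> t")
  case True
  have "{0..<t+1} = insert t {0..<t}" using True by auto
  then show ?thesis using True unfolding sumS_def by (simp add: add.commute)
next
  case False
  show ?thesis
  proof (cases "t = -1")
    case True
    have "{-1..<0::int} = {-1}" by auto
    then show ?thesis using True unfolding sumS_def by simp
  next
    case False
    have "{t..<0} = insert t {t+1..<0}" using \<open>\<not> 0 \<le> t\<close> by auto
    then show ?thesis using False \<open>\<not> 0 \<le> t\<close> unfolding sumS_def by simp
  qed
qed

lemma frame_inst:
  fixes M N :: nat and Z :: "nat \<Rightarrow> real" and S :: "int \<Rightarrow> real" and W :: "int \<Rightarrow> nat \<Rightarrow> real"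
  assumes "0 < M"
    and Zmono: "\<And>i j. i \<le> j \<Longrightarrow> j < N \<Longrightarrow> Z j \<le> Z i"
    and Wper: "\<And>m r. W m r = W (m mod int M) r"
    and Wcond: "\<And>m r0 r1. 0 \<le> m \<Longrightarrow> m < int M \<Longrightarrow> r0 < r1 \<Longrightarrow> r1 < N \<Longrightarrow>
        W m r1 - W (m+1) r1 + W (m+1) r0 - W m r0 + (Z r0 - Z r1) / real M \<ge> 0"
  shows "frame N (Xf W Z S M k t) Z"
proof
  show "\<And>i j. i \<le> j \<Longrightarrow> j < N \<Longrightarrow> Z j \<le> Z i" by (rule Zmono)
  fix \<rho> r0 r1 assume r: "r0 \<le> r1" "r1 < N"
  define m where "m = k + int \<rho>"
  define m' where "m' = m mod int M"
  have m'b: "0 \<le> m'" "m' < int M" using assms(1) unfolding m'_def by auto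
  have w1: "W m r = W m' r" for r using Wper unfolding m'_def by simp
  have w2: "W (m + 1) r = W (m' + 1) r" for r
  proof -
    have "(m + 1) mod int M = (m' + 1) mod int M" unfolding m'_def by (simp add: mod_add_left_eq)
    then show ?thesis using Wper[of "m+1" r] Wper[of "m'+1" r] by simp
  qed
  have diff: "Xf W Z S M k t (Suc \<rho>) r - Xf W Z S M k t \<rho> r = W (m + 1) r - W m r + Z r / real M" for r
    unfolding Xf_def m_def by (simp add: algebra_simps add_divide_distrib)
  show "Xf W Z S M k t (Suc \<rho>) r1 - Xf W Z S M k t \<rho> r1 \<le> Xf W Z S M k t (Suc \<rho>) r0 - Xf W Z S M k t \<rho> r0"
  proof (cases "r0 = r1")
    case True then show ?thesis by simp
  next
    case False
    then have "r0 < r1" using r by simp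
    have "W m' r1 - W (m'+1) r1 + W (m'+1) r0 - W m' r0 + (Z r0 - Z r1) / real M \<ge> 0"
      using Wcond[OF m'b \<open>r0 < r1\<close> r(2)] .
    then show ?thesis unfolding diff w1 w2 by (simp add: diff_divide_distrib)
  qed
qed

lemma main_kt:
  fixes M N :: nat and Z :: "nat \<Rightarrow> real" and S :: "int \<Rightarrow> real"
    and W :: "int \<Rightarrow> nat \<Rightarrow> real" and k t :: int
  assumes "0 < M" and "0 < N"
    and Zmono: "\<And>i j. i \<le> j \<Longrightarrow> j < N \<Longrightarrow> Z j \<le> Z i"
    and Wper: "\<And>m r. W m r = W (m mod int M) r"
    and Wcond: "\<And>m r0 r1. 0 \<le> m \<Longrightarrow> m < int M \<Longrightarrow> r0 < r1 \<Longrightarrow> r1 < N \<Longrightarrow>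
        W m r1 - W (m+1) r1 + W (m+1) r0 - W m r0 + (Z r0 - Z r1) / real M \<ge> 0"
  shows "      Ef W Z S M N k t (N-1) = \<infinity> \<and> Etf W Z S M N k t (N-1) = \<infinity>
    \<and> (\<forall>n<N. Qf W Z S M N k (t+1) n = min (Df W Z S M N k t n) (Etf W Z S M N k t n))
    \<and> (\<forall>n. n + 1 < N \<longrightarrow>
          Ef W Z S M N k (t+1) n = min (Ff W Z S M N k t n) (Etf W Z S M N (k + int M) t n)
        \<and> Df W Z S M N k t (n+1) = Df W Z S M N k t n - Qf W Z S M N k (t+1) n + Qf W Z S M N k t (n+1)
        \<and> Etf W Z S M N (k+1) t n = Etf W Z S M N k t n - Qf W Z S M N k (t+1) n + Qf W Z S M N k t (n+1)
        \<and> Ff W Z S M N k t (n+1) = Ff W Z S M N k t n - Ef W Z S M N k (t+1) n + Ef W Z S M N k t (n+1)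
        \<and> Etf W Z S M N k t (n+1) = Etf W Z S M N (k + int M) t n - Ef W Z S M N k (t+1) n + Ef W Z S M N k t (n+1))
    \<and> Df W Z S M N k t 0 = Qf W Z S M N k t 0
    \<and> Ff W Z S M N k t 0 = Ef W Z S M N k t 0
        + max 0 (ereal (S t) - (\<Sum>j<M. Qf W Z S M N (k + int j) t 0))
    \<and> Etf W Z S M N k t 0 = Ef W Z S M N k t 0
        + max 0 ((\<Sum>j<M. Qf W Z S M N (k + int j) t 0) - ereal (S t))"
proof -
  let ?T = "T W Z S M N"
  interpret F: frame N "Xf W Z S M k t" Z by (rule frame_inst) (use assms in auto)
  have Mpos: "0 < real M" using assms(1) by simp
  have Wsh: "W (k + int M + int j) r = W (k + int j) r" for j r
  proof -
    have "(k + int M + int j) mod int M = (k + int j) mod int M"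
      using mod_add_self2[of "k + int j" "int M"] by (simp add: algebra_simps)
    then show ?thesis using Wper[of "k + int M + int j" r] Wper[of "k + int j" r] by simp
  qed
  have sS: "sumS S (t+1) x = sumS S t x + min x (S t)" for x by (rule sumS_step)
  have rD: "Tval W Z S M k t n rs = F.Cs lD n (nth rs)" for n rs
    unfolding Tval_def F.Cs_def F.K_def Xf_def lD_def
    by (rule sum.cong) (use Mpos in \<open>auto simp: field_simps\<close>)
  have rL: "Tval W Z S M (k+1) t n rs = F.Cs lL n (nth rs)" for n rs
    unfolding Tval_def F.Cs_def F.K_def Xf_def lL_def
    by (rule sum.cong) (use Mpos in \<open>auto simp: field_simps\<close>)
  have rU: "Tval W Z S M (k + int M) t n rs = F.Cs lU n (nth rs)" for n rs
    unfolding Tval_def F.Cs_def F.K_def Xf_def lU_def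
    by (rule sum.cong) (use Mpos Wsh in \<open>auto simp: field_simps\<close>)
  have rD1: "Tval W Z S M k (t+1) n rs = F.Cs lD n (nth rs) + F.ms (S t) n (nth rs)" for n rs
    unfolding rD[symmetric] F.ms_def Tval_def sS by (simp add: sum.distrib algebra_simps)
  have rL1: "Tval W Z S M (k+1) (t+1) n rs = F.Cs lL n (nth rs) + F.ms (S t) n (nth rs)" for n rs
    unfolding rL[symmetric] F.ms_def Tval_def sS by (simp add: sum.distrib algebra_simps)
  have rU1: "Tval W Z S M (k + int M) (t+1) n rs = F.Cs lU n (nth rs) + F.ms (S t) n (nth rs)" for n rs
    unfolding rU[symmetric] F.ms_def Tval_def sS by (simp add: sum.distrib algebra_simps)
  define a where "a n = tau W Z S M N k t n" for n
  define b where "b n = tau W Z S M N (k+1) t n" for n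
  define c where "c n = tau W Z S M N k (t+1) n" for n
  define d where "d n = tau W Z S M N (k+1) (t+1) n" for n
  define e where "e n = tau W Z S M N (k + int M) t n" for n
  define f where "f n = tau W Z S M N (k + int M) (t+1) n" for n
  have ta: "a n = F.Mn lD n" for n unfolding a_def tau_def F.Mn_def rD ..
  have tb: "b n = F.Mn lL n" for n unfolding b_def tau_def F.Mn_def rL ..
  have te: "e n = F.Mn lU n" for n unfolding e_def tau_def F.Mn_def rU ..
  have tc: "c n = F.Mm (S t) lD n" for n unfolding c_def tau_def F.Mm_def rD1 ..
  have td: "d n = F.Mm (S t) lL n" for n unfolding d_def tau_def F.Mm_def rL1 ..
  have tf: "f n = F.Mm (S t) lU n" for n unfolding f_def tau_def F.Mm_def rU1 ..
  have I1: "a s + d s \<le> b s + c s" "Suc s \<le> N \<Longrightarrow> a s + d s \<le> a (Suc s) + d (s - 1)"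
      "b s + c s \<le> a s + d s \<or> (Suc s \<le> N \<and> a (Suc s) + d (s - 1) \<le> a s + d s)"
    if "1 \<le> s" "s \<le> N" for s
    using F.I1_real[OF that, of "S t"] unfolding ta tb tc td by auto
  have I2: "c (Suc s) + e s \<le> a (Suc s) + f s + S t" "c (Suc s) + e s \<le> e (Suc s) + c s"
      "a (Suc s) + f s + S t \<le> c (Suc s) + e s \<or> e (Suc s) + c s \<le> c (Suc s) + e s"
    if "Suc s \<le> N" for s
    using F.I2_real[OF that, of "S t"] unfolding ta tc te tf by auto
  have tau0: "tau W Z S M N k' t' 0 = 0" for k' t' unfolding tau_def by (simp add: incr0 Tval_def)
  have a0: "a 0 = 0" "b 0 = 0" "c 0 = 0" "d 0 = 0" "e 0 = 0" "f 0 = 0"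
    unfolding a_def b_def c_def d_def e_def f_def tau0 by simp_all
  have Ta: "n \<le> N \<Longrightarrow> T W Z S M N k t n = ereal (a n)" for n using T_fin a_def by simp
  have Tb: "n \<le> N \<Longrightarrow> T W Z S M N (k+1) t n = ereal (b n)" for n using T_fin b_def by simp
  have Tc: "n \<le> N \<Longrightarrow> T W Z S M N k (t+1) n = ereal (c n)" for n using T_fin c_def by simp
  have Td: "n \<le> N \<Longrightarrow> T W Z S M N (k+1) (t+1) n = ereal (d n)" for n using T_fin d_def by simp
  have Te: "n \<le> N \<Longrightarrow> T W Z S M N (k + int M) t n = ereal (e n)" for n using T_fin e_def by simp
  have Tf: "n \<le> N \<Longrightarrow> T W Z S M N (k + int M) (t+1) n = ereal (f n)" for n using T_fin f_def by simp
  have Ti: "N < n \<Longrightarrow> T W Z S M N k' t' n = \<infinity>" for k' t' n by (rule T_inf)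
  note Ts = Ta Tb Tc Td Te Tf Ti
  have emin: "min (ereal x) (ereal y) = ereal (min x y)" for x y by (simp add: min_def)
  have c1: "Ef W Z S M N k t (N-1) = \<infinity>"
    unfolding Ef_def using assms(2) by (simp add: Ts)
  have c2: "Etf W Z S M N k t (N-1) = \<infinity>"
    unfolding Etf_def using assms(2) by (simp add: Ts)
  have c3: "Qf W Z S M N k (t+1) n = min (Df W Z S M N k t n) (Etf W Z S M N k t n)" if "n < N" for n
  proof -
    have h1: "a (Suc n) + d (Suc n) \<le> b (Suc n) + c (Suc n)" using I1(1)[of "Suc n"] that by simp
    have h3: "b (Suc n) + c (Suc n) \<le> a (Suc n) + d (Suc n) \<or>
        (Suc (Suc n) \<le> N \<and> a (Suc (Suc n)) + d n \<le> a (Suc n) + d (Suc n))"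
      using I1(3)[of "Suc n"] that by simp
    have q: "Qf W Z S M N k (t+1) n = ereal (c n - c (Suc n) + d (Suc n) - d n)"
      unfolding Qf_def using that by (simp add: Tc Td)
    have dd: "Df W Z S M N k t n = ereal (c n - a (Suc n) + b (Suc n) - d n)"
      unfolding Df_def using that by (simp add: Ta Tb Tc Td)
    show ?thesis
    proof (cases "Suc (Suc n) \<le> N")
      case True
      have h2: "a (Suc n) + d (Suc n) \<le> a (Suc (Suc n)) + d n" using I1(2)[of "Suc n"] that True by simp
      have r: "c n - c (Suc n) + d (Suc n) - d n =
          min (c n - a (Suc n) + b (Suc n) - d n) (a (Suc (Suc n)) - a (Suc n) + c n - c (Suc n))"
      proof (rule min_char)
        show "c n - c (Suc n) + d (Suc n) - d n \<le> c n - a (Suc n) + b (Suc n) - d n" using h1 by linarith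
        show "c n - c (Suc n) + d (Suc n) - d n \<le> a (Suc (Suc n)) - a (Suc n) + c n - c (Suc n)" using h2 by linarith
        show "c n - c (Suc n) + d (Suc n) - d n = c n - a (Suc n) + b (Suc n) - d n \<or>
          c n - c (Suc n) + d (Suc n) - d n = a (Suc (Suc n)) - a (Suc n) + c n - c (Suc n)"
          using h1 h2 h3 by linarith
      qed
      have et: "Etf W Z S M N k t n = ereal (a (Suc (Suc n)) - a (Suc n) + c n - c (Suc n))"
        unfolding Etf_def using True by (simp add: Ta Tc)
      show ?thesis unfolding q dd et emin r ..
    next
      case False
      have r: "c n - c (Suc n) + d (Suc n) - d n = c n - a (Suc n) + b (Suc n) - d n"
        using h1 h3 False by linarith
      have et: "Etf W Z S M N k t n = \<infinity>"
        unfolding Etf_def using False that by (simp add: Ta Tc Ti)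
      show ?thesis unfolding q dd et r by simp
    qed
  qed
  have c4: "Ef W Z S M N k (t+1) n = min (Ff W Z S M N k t n) (Etf W Z S M N (k + int M) t n)
        \<and> Df W Z S M N k t (n+1) = Df W Z S M N k t n - Qf W Z S M N k (t+1) n + Qf W Z S M N k t (n+1)
        \<and> Etf W Z S M N (k+1) t n = Etf W Z S M N k t n - Qf W Z S M N k (t+1) n + Qf W Z S M N k t (n+1)
        \<and> Ff W Z S M N k t (n+1) = Ff W Z S M N k t n - Ef W Z S M N k (t+1) n + Ef W Z S M N k t (n+1)
        \<and> Etf W Z S M N k t (n+1) = Etf W Z S M N (k + int M) t n - Ef W Z S M N k (t+1) n + Ef W Z S M N k t (n+1)"
    if "n + 1 < N" for n
  proof -
    have s2: "Suc (Suc n) \<le> N" using that by simp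
    have g1: "c (Suc (Suc n)) + e (Suc n) \<le> a (Suc (Suc n)) + f (Suc n) + S t" using I2(1)[OF s2] .
    have g2: "c (Suc (Suc n)) + e (Suc n) \<le> e (Suc (Suc n)) + c (Suc n)" using I2(2)[OF s2] .
    have g3: "a (Suc (Suc n)) + f (Suc n) + S t \<le> c (Suc (Suc n)) + e (Suc n) \<or>
        e (Suc (Suc n)) + c (Suc n) \<le> c (Suc (Suc n)) + e (Suc n)" using I2(3)[OF s2] .
    have r: "c (Suc (Suc n)) - c (Suc n) + f n - f (Suc n) =
        min (a (Suc (Suc n)) - c (Suc n) + f n - e (Suc n) + S t) (e (Suc (Suc n)) - e (Suc n) + f n - f (Suc n))"
    proof (rule min_char)
      show "c (Suc (Suc n)) - c (Suc n) + f n - f (Suc n) \<le> a (Suc (Suc n)) - c (Suc n) + f n - e (Suc n) + S t" using g1 by linarith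
      show "c (Suc (Suc n)) - c (Suc n) + f n - f (Suc n) \<le> e (Suc (Suc n)) - e (Suc n) + f n - f (Suc n)" using g2 by linarith
      show "c (Suc (Suc n)) - c (Suc n) + f n - f (Suc n) = a (Suc (Suc n)) - c (Suc n) + f n - e (Suc n) + S t \<or>
        c (Suc (Suc n)) - c (Suc n) + f n - f (Suc n) = e (Suc (Suc n)) - e (Suc n) + f n - f (Suc n)"
        using g1 g2 g3 by linarith
    qed
    have E1: "Ef W Z S M N k (t+1) n = ereal (c (Suc (Suc n)) - c (Suc n) + f n - f (Suc n))"
      unfolding Ef_def using s2 by (simp add: Tc Tf)
    have F0: "Ff W Z S M N k t n = ereal (a (Suc (Suc n)) - c (Suc n) + f n - e (Suc n) + S t)"
      unfolding Ff_def using s2 by (simp add: Ta Tc Te Tf)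
    have Et0: "Etf W Z S M N (k + int M) t n = ereal (e (Suc (Suc n)) - e (Suc n) + f n - f (Suc n))"
      unfolding Etf_def using s2 by (simp add: Te Tf)
    have Q1: "Qf W Z S M N k (t+1) n = ereal (c n - c (Suc n) + d (Suc n) - d n)"
      unfolding Qf_def using s2 by (simp add: Tc Td)
    have Q2: "Qf W Z S M N k t (n+1) = ereal (a (Suc n) - a (Suc (Suc n)) + b (Suc (Suc n)) - b (Suc n))"
      unfolding Qf_def using s2 by (simp add: Ta Tb)
    have D0: "Df W Z S M N k t n = ereal (c n - a (Suc n) + b (Suc n) - d n)"
      unfolding Df_def using s2 by (simp add: Ta Tb Tc Td)
    have D1: "Df W Z S M N k t (n+1) = ereal (c (Suc n) - a (Suc (Suc n)) + b (Suc (Suc n)) - d (Suc n))"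
      unfolding Df_def using s2 by (simp add: Ta Tb Tc Td)
    have Etk: "Etf W Z S M N k t n = ereal (a (Suc (Suc n)) - a (Suc n) + c n - c (Suc n))"
      unfolding Etf_def using s2 by (simp add: Ta Tc)
    have Etk1: "Etf W Z S M N (k+1) t n = ereal (b (Suc (Suc n)) - b (Suc n) + d n - d (Suc n))"
      unfolding Etf_def using s2 by (simp add: Tb Td)
    show ?thesis
    proof (intro conjI)
      show "Ef W Z S M N k (t+1) n = min (Ff W Z S M N k t n) (Etf W Z S M N (k + int M) t n)"
        unfolding E1 F0 Et0 emin r ..
      show "Df W Z S M N k t (n+1) = Df W Z S M N k t n - Qf W Z S M N k (t+1) n + Qf W Z S M N k t (n+1)"
        unfolding D1 D0 Q1 Q2 by simp
      show "Etf W Z S M N (k+1) t n = Etf W Z S M N k t n - Qf W Z S M N k (t+1) n + Qf W Z S M N k t (n+1)"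
        unfolding Etk1 Etk Q1 Q2 by simp
      show "Ff W Z S M N k t (n+1) = Ff W Z S M N k t n - Ef W Z S M N k (t+1) n + Ef W Z S M N k t (n+1)"
      proof (cases "Suc (Suc (Suc n)) \<le> N")
        case True
        have F1: "Ff W Z S M N k t (n+1) = ereal (a (Suc (Suc (Suc n))) - c (Suc (Suc n)) + f (Suc n) - e (Suc (Suc n)) + S t)"
          unfolding Ff_def using True by (simp add: Ta Tc Te Tf)
        have E2: "Ef W Z S M N k t (n+1) = ereal (a (Suc (Suc (Suc n))) - a (Suc (Suc n)) + e (Suc n) - e (Suc (Suc n)))"
          unfolding Ef_def using True by (simp add: Ta Te)
        show ?thesis unfolding F1 F0 E1 E2 by simp
      next
        case False
        have F1: "Ff W Z S M N k t (n+1) = \<infinity>"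
          unfolding Ff_def using False s2 by (simp add: Ta Tc Te Tf Ti)
        have E2: "Ef W Z S M N k t (n+1) = \<infinity>"
          unfolding Ef_def using False s2 by (simp add: Ta Te Ti)
        show ?thesis unfolding F1 F0 E1 E2 by simp
      qed
      show "Etf W Z S M N k t (n+1) = Etf W Z S M N (k + int M) t n - Ef W Z S M N k (t+1) n + Ef W Z S M N k t (n+1)"
      proof (cases "Suc (Suc (Suc n)) \<le> N")
        case True
        have X1: "Etf W Z S M N k t (n+1) = ereal (a (Suc (Suc (Suc n))) - a (Suc (Suc n)) + c (Suc n) - c (Suc (Suc n)))"
          unfolding Etf_def using True by (simp add: Ta Tc)
        have E2: "Ef W Z S M N k t (n+1) = ereal (a (Suc (Suc (Suc n))) - a (Suc (Suc n)) + e (Suc n) - e (Suc (Suc n)))"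
          unfolding Ef_def using True by (simp add: Ta Te)
        show ?thesis unfolding X1 Et0 E1 E2 by simp
      next
        case False
        have X1: "Etf W Z S M N k t (n+1) = \<infinity>"
          unfolding Etf_def using False s2 by (simp add: Ta Tc Ti)
        have E2: "Ef W Z S M N k t (n+1) = \<infinity>"
          unfolding Ef_def using False s2 by (simp add: Ta Te Ti)
        show ?thesis unfolding X1 Et0 E1 E2 by simp
      qed
    qed
  qed
  have N1: "Suc 0 \<le> N" using assms(2) by simp
  have c5: "Df W Z S M N k t 0 = Qf W Z S M N k t 0"
    unfolding Df_def Qf_def using N1 by (simp add: Ta Tb Tc Td a0)
  have sumQ: "(\<Sum>j<M. Qf W Z S M N (k + int j) t 0) = ereal (e 1 - a 1)"
  proof -
    have "Qf W Z S M N (k + int j) t 0 = ereal (tau W Z S M N (k + int (Suc j)) t 1 - tau W Z S M N (k + int j) t 1)" for j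
    proof -
      have "T W Z S M N (k + int j + 1) t 1 = ereal (tau W Z S M N (k + int (Suc j)) t 1)"
      proof -
        have eqk: "k + int (Suc j) = k + int j + 1" by simp
        show ?thesis unfolding eqk by (rule T_fin) (use N1 in simp)
      qed
      moreover have "T W Z S M N (k + int j) t 1 = ereal (tau W Z S M N (k + int j) t 1)"
        using T_fin[OF N1] by simp
      moreover have "T W Z S M N k' t 0 = 0" for k' unfolding T_def by simp
      ultimately show ?thesis unfolding Qf_def by simp
    qed
    then have "(\<Sum>j<M. Qf W Z S M N (k + int j) t 0)
        = (\<Sum>j<M. ereal (tau W Z S M N (k + int (Suc j)) t 1 - tau W Z S M N (k + int j) t 1))" by simp
    also have "\<dots> = ereal (\<Sum>j<M. tau W Z S M N (k + int (Suc j)) t 1 - tau W Z S M N (k + int j) t 1)"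
      by (simp add: sum_ereal)
    also have "(\<Sum>j<M. tau W Z S M N (k + int (Suc j)) t 1 - tau W Z S M N (k + int j) t 1)
        = tau W Z S M N (k + int M) t 1 - tau W Z S M N (k + int 0) t 1"
      by (rule sum_lessThan_telescope)
    finally show ?thesis unfolding a_def e_def by simp
  qed
  have b1: "c (Suc 0) + e 0 \<le> a (Suc 0) + f 0 + S t" "c (Suc 0) + e 0 \<le> e (Suc 0) + c 0"
      "a (Suc 0) + f 0 + S t \<le> c (Suc 0) + e 0 \<or> e (Suc 0) + c 0 \<le> c (Suc 0) + e 0"
    using I2[OF N1] by auto
  have E00: "Ef W Z S M N k t 0 = (if Suc (Suc 0) \<le> N then ereal (a 2 - a 1 - e 1) else \<infinity>)"
  proof (cases "Suc (Suc 0) \<le> N")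
    case True then show ?thesis unfolding Ef_def using True by (simp add: Ta Te a0 numeral_2_eq_2)
  next
    case False then show ?thesis unfolding Ef_def using False N1 by (simp add: Ta Te Ti a0)
  qed
  have c6: "Ff W Z S M N k t 0 = Ef W Z S M N k t 0 + max 0 (ereal (S t) - (\<Sum>j<M. Qf W Z S M N (k + int j) t 0))"
  proof (cases "Suc (Suc 0) \<le> N")
    case True
    have r: "a 2 - c 1 - e 1 + S t = a 2 - a 1 - e 1 + max 0 (S t - (e 1 - a 1))"
      using b1 a0 unfolding max_def by (cases "0 \<le> S t - (e 1 - a 1)") auto
    have F00: "Ff W Z S M N k t 0 = ereal (a 2 - c 1 - e 1 + S t)"
      unfolding Ff_def using True by (simp add: Ta Tc Te Tf a0 numeral_2_eq_2)
    have rhs: "ereal (a 2 - a 1 - e 1) + max 0 (ereal (S t) - ereal (e 1 - a 1)) =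
        ereal (a 2 - a 1 - e 1 + max 0 (S t - (e 1 - a 1)))"
      by (cases "0 \<le> S t - (e 1 - a 1)") (auto simp: max_def)
    have Eq0: "Ef W Z S M N k t 0 = ereal (a 2 - a 1 - e 1)" using E00 True by simp
    show ?thesis unfolding F00 sumQ Eq0 rhs r ..
  next
    case False
    have F00: "Ff W Z S M N k t 0 = \<infinity>"
      unfolding Ff_def using False N1 by (simp add: Ta Tc Te Tf Ti a0)
    show ?thesis unfolding F00 E00 sumQ using False by simp
  qed
  have c7: "Etf W Z S M N k t 0 = Ef W Z S M N k t 0 + max 0 ((\<Sum>j<M. Qf W Z S M N (k + int j) t 0) - ereal (S t))"
  proof (cases "Suc (Suc 0) \<le> N")
    case True
    have r: "a 2 - a 1 - c 1 = a 2 - a 1 - e 1 + max 0 (e 1 - a 1 - S t)"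
      using b1 a0 unfolding max_def by (cases "0 \<le> e 1 - a 1 - S t") auto
    have X00: "Etf W Z S M N k t 0 = ereal (a 2 - a 1 - c 1)"
      unfolding Etf_def using True by (simp add: Ta Tc a0 numeral_2_eq_2)
    have rhs: "ereal (a 2 - a 1 - e 1) + max 0 (ereal (e 1 - a 1) - ereal (S t)) =
        ereal (a 2 - a 1 - e 1 + max 0 (e 1 - a 1 - S t))"
      by (cases "0 \<le> e 1 - a 1 - S t") (auto simp: max_def)
    have Eq0: "Ef W Z S M N k t 0 = ereal (a 2 - a 1 - e 1)" using E00 True by simp
    show ?thesis unfolding X00 sumQ Eq0 rhs r ..
  next
    case False
    have X00: "Etf W Z S M N k t 0 = \<infinity>"
      unfolding Etf_def using False N1 by (simp add: Ta Tc Ti a0)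
    show ?thesis unfolding X00 E00 sumQ using False by simp
  qed
  show ?thesis using c1 c2 c3 c4 c5 c6 c7 by blast
qed

theorem theorem5:
  fixes M N :: nat and Z :: "nat \<Rightarrow> real" and S :: "int \<Rightarrow> real"
    and W :: "int \<Rightarrow> nat \<Rightarrow> real"
  assumes "0 < M" and "0 < N"
    and Zmono: "\<And>i j. i \<le> j \<Longrightarrow> j < N \<Longrightarrow> Z j \<le> Z i"
    and Wper: "\<And>m r. W m r = W (m mod int M) r"
    and Wcond: "\<And>m r0 r1. 0 \<le> m \<Longrightarrow> m < int M \<Longrightarrow> r0 < r1 \<Longrightarrow> r1 < N \<Longrightarrow>
        W m r1 - W (m+1) r1 + W (m+1) r0 - W m r0 + (Z r0 - Z r1) / real M \<ge> 0"
  shows "\<forall>k t.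
      Ef W Z S M N k t (N-1) = \<infinity> \<and> Etf W Z S M N k t (N-1) = \<infinity>
    \<and> (\<forall>n<N. Qf W Z S M N k (t+1) n = min (Df W Z S M N k t n) (Etf W Z S M N k t n))
    \<and> (\<forall>n. n + 1 < N \<longrightarrow>
          Ef W Z S M N k (t+1) n = min (Ff W Z S M N k t n) (Etf W Z S M N (k + int M) t n)
        \<and> Df W Z S M N k t (n+1) = Df W Z S M N k t n - Qf W Z S M N k (t+1) n + Qf W Z S M N k t (n+1)
        \<and> Etf W Z S M N (k+1) t n = Etf W Z S M N k t n - Qf W Z S M N k (t+1) n + Qf W Z S M N k t (n+1)
        \<and> Ff W Z S M N k t (n+1) = Ff W Z S M N k t n - Ef W Z S M N k (t+1) n + Ef W Z S M N k t (n+1)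
        \<and> Etf W Z S M N k t (n+1) = Etf W Z S M N (k + int M) t n - Ef W Z S M N k (t+1) n + Ef W Z S M N k t (n+1))
    \<and> Df W Z S M N k t 0 = Qf W Z S M N k t 0
    \<and> Ff W Z S M N k t 0 = Ef W Z S M N k t 0
        + max 0 (ereal (S t) - (\<Sum>j<M. Qf W Z S M N (k + int j) t 0))
    \<and> Etf W Z S M N k t 0 = Ef W Z S M N k t 0
        + max 0 ((\<Sum>j<M. Qf W Z S M N (k + int j) t 0) - ereal (S t))"
  by (intro allI) (rule main_kt[OF assms])

end
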